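(* Let $G$ be a finite group and let $G=G_+G_-$ and $G=G_+'G_-$ be two unique factorizations with the same subgroup $G_-$. Let $\sigma:G_+\to G_-$ be the map with $G_+'=\{\sigma(u)u: u\in G_+\}$ (such a map exists and is unique). Define the linear map $\phi:H(G;G_+',G_-)\to H(G;G_+,G_-)$ by $\phi\{\sigma(u)ux\}'=\{ux\}$ for $u\in G_+$, $x\in G_-$, and \[ T=\sum_{u,v\in G_+}\{u\,\sigma(v)\}\otimes\{v\}\in H(G;G_+,G_-)\otimes H(G;G_+,G_-). \] Then $(\phi,T)$ is a quasi-isomorphism of Hopf algebras from $H(G;G_+',G_-)$ to $H(G;G_+,G_-)$.
   Context: A unique factorization $G=K G_-$ consists of subgroups $K,G_-$ such that every $g\in G$ is uniquely $g=g_Kg_-$ with $g_K\in K$, $g_-\in G_-$; for $u\in K$, $x\in G_-$ define ${}^u x\in G_-$, $u^x\in K$ by $ux=({}^u x)(u^x)$. $H(G;K,G_-)$ is the complex vector space with basis $G$ and Hopf algebra structure: $\{g\}\{h\}=\delta_{g_K^{\,g_-},\,h_K}\{g h_-\}$; unit $1=\sum_{u\in K}\{u\}$; $\Delta\{g\}=\sum_{h\in K}\{g_Kh^{-1}({}^{h}g_-)\}\otimes\{h g_-\}$; $\varepsilon\{g\}=\delta_{g_K,e}$; $S\{g\}=\{g^{-1}\}$. The basis element $g$ is written $\{g\}$ in $H(G;G_+,G_-)$ and $\{g\}'$ in $H(G;G_+',G_-)$. A quasi-isomorphism of Hopf algebras from $H'$ to $H$ is a pair $(\phi,T)$ where $\phi:H'\to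 H$ is an algebra isomorphism and $T\in H\otimes H$ is invertible such that $(\phi\otimes\phi)\Delta'(a)=T\,\Delta(\phi(a))\,T^{-1}$ for all $a\in H'$, $(T\otimes 1)(\Delta\otimes\mathrm{id})T=(1\otimes T)(\mathrm{id}\otimes\Delta)T$, and $(\varepsilon\otimes\mathrm{id})T=(\mathrm{id}\otimes\varepsilon)T=1$. *)

theory Defs
  imports "HOL-Algebra.Group" "HOL-Algebra.Coset" Complex_Main
begin

definition unique_factorization :: "('g,'b) monoid_scheme \<Rightarrow> 'g set \<Rightarrow> 'g set \<Rightarrow> bool" where
  "unique_factorization G K M \<longleftrightarrow> subgroup K G \<and> subgroup M G \<and>
     (\<forall>g\<in>carrier G. \<exists>!p. fst p \<in> K \<and> snd p \<in> M \<and> g = fst p \<otimes>\<^bsub>G\<^esub> snd p)"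

definition fK :: "('g,'b) monoid_scheme \<Rightarrow> 'g set \<Rightarrow> 'g set \<Rightarrow> 'g \<Rightarrow> 'g" where
  "fK G K M g = (THE u. u \<in> K \<and> (\<exists>x\<in>M. g = u \<otimes>\<^bsub>G\<^esub> x))"
definition fM :: "('g,'b) monoid_scheme \<Rightarrow> 'g set \<Rightarrow> 'g set \<Rightarrow> 'g \<Rightarrow> 'g" where
  "fM G K M g = (THE x. x \<in> M \<and> (\<exists>u\<in>K. g = u \<otimes>\<^bsub>G\<^esub> x))"

definition actM :: "('g,'b) monoid_scheme \<Rightarrow> 'g set \<Rightarrow> 'g set \<Rightarrow> 'g \<Rightarrow> 'g \<Rightarrow> 'g" where
  "actM G K M u x = (THE y. y \<in> M \<and> (\<exists>v\<in>K. u \<otimes>\<^bsub>G\<^esub> x = y \<otimes>\<^bsub>G\<^esub> v))"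
definition actK :: "('g,'b) monoid_scheme \<Rightarrow> 'g set \<Rightarrow> 'g set \<Rightarrow> 'g \<Rightarrow> 'g \<Rightarrow> 'g" where
  "actK G K M u x = (THE v. v \<in> K \<and> (\<exists>y\<in>M. u \<otimes>\<^bsub>G\<^esub> x = y \<otimes>\<^bsub>G\<^esub> v))"

text \<open>Elements of H(G;K,M) are functions carrier G -> complex (coefficients w.r.t. the basis G);
  elements of H\<otimes>H are functions on pairs, elements of H\<otimes>H\<otimes>H functions on triples.\<close>
definition Hsp :: "('g,'b) monoid_scheme \<Rightarrow> ('g \<Rightarrow> complex) set" where
  "Hsp G = {a. \<forall>g. g \<notin> carrier G \<longrightarrow> a g = 0}"

definition bas :: "'g \<Rightarrow> 'g \<Rightarrow> complex" where
  "bas g = (\<lambda>z. if z = g then 1 else 0)"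

definition mc :: "('g,'b) monoid_scheme \<Rightarrow> 'g set \<Rightarrow> 'g set \<Rightarrow> 'g \<Rightarrow> 'g \<Rightarrow> 'g \<Rightarrow> complex" where
  "mc G K M g h z = (if actK G K M (fK G K M g) (fM G K M g) = fK G K M h
                        \<and> z = g \<otimes>\<^bsub>G\<^esub> fM G K M h then 1 else 0)"

definition hmul :: "('g,'b) monoid_scheme \<Rightarrow> 'g set \<Rightarrow> 'g set \<Rightarrow> ('g \<Rightarrow> complex) \<Rightarrow> ('g \<Rightarrow> complex) \<Rightarrow> 'g \<Rightarrow> complex" where
  "hmul G K M a b = (\<lambda>z. \<Sum>g\<in>carrier G. \<Sum>h\<in>carrier G. a g * b h * mc G K M g h z)"

definition hone :: "'g set \<Rightarrow> 'g \<Rightarrow> complex" where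
  "hone K = (\<lambda>z. if z \<in> K then 1 else 0)"

definition dc :: "('g,'b) monoid_scheme \<Rightarrow> 'g set \<Rightarrow> 'g set \<Rightarrow> 'g \<Rightarrow> 'g \<Rightarrow> 'g \<Rightarrow> complex" where
  "dc G K M g z w = (\<Sum>h\<in>K. if z = fK G K M g \<otimes>\<^bsub>G\<^esub> inv\<^bsub>G\<^esub> h \<otimes>\<^bsub>G\<^esub> actM G K M h (fM G K M g)
                                \<and> w = h \<otimes>\<^bsub>G\<^esub> fM G K M g then 1 else 0)"

definition hDelta :: "('g,'b) monoid_scheme \<Rightarrow> 'g set \<Rightarrow> 'g set \<Rightarrow> ('g \<Rightarrow> complex) \<Rightarrow> 'g \<times> 'g \<Rightarrow> complex" where
  "hDelta G K M a = (\<lambda>(z,w). \<Sum>g\<in>carrier G. a g * dc G K M g z w)"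

definition ec :: "('g,'b) monoid_scheme \<Rightarrow> 'g set \<Rightarrow> 'g set \<Rightarrow> 'g \<Rightarrow> complex" where
  "ec G K M g = (if fK G K M g = \<one>\<^bsub>G\<^esub> then 1 else 0)"

definition hmul2 :: "('g,'b) monoid_scheme \<Rightarrow> 'g set \<Rightarrow> 'g set \<Rightarrow> ('g\<times>'g \<Rightarrow> complex) \<Rightarrow> ('g\<times>'g \<Rightarrow> complex) \<Rightarrow> 'g\<times>'g \<Rightarrow> complex" where
  "hmul2 G K M A B = (\<lambda>(z1,z2). \<Sum>(g1,g2)\<in>carrier G \<times> carrier G. \<Sum>(h1,h2)\<in>carrier G \<times> carrier G.
        A (g1,g2) * B (h1,h2) * mc G K M g1 h1 z1 * mc G K M g2 h2 z2)"

definition hone2 :: "'g set \<Rightarrow> 'g\<times>'g \<Rightarrow> complex" where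
  "hone2 K = (\<lambda>(z1,z2). hone K z1 * hone K z2)"

definition hmul3 :: "('g,'b) monoid_scheme \<Rightarrow> 'g set \<Rightarrow> 'g set \<Rightarrow> ('g\<times>'g\<times>'g \<Rightarrow> complex) \<Rightarrow> ('g\<times>'g\<times>'g \<Rightarrow> complex) \<Rightarrow> 'g\<times>'g\<times>'g \<Rightarrow> complex" where
  "hmul3 G K M A B = (\<lambda>(z1,z2,z3). \<Sum>(g1,g2,g3)\<in>carrier G \<times> carrier G \<times> carrier G.
        \<Sum>(h1,h2,h3)\<in>carrier G \<times> carrier G \<times> carrier G.
        A (g1,g2,g3) * B (h1,h2,h3) * mc G K M g1 h1 z1 * mc G K M g2 h2 z2 * mc G K M g3 h3 z3)"

definition tens_T1 :: "'g set \<Rightarrow> ('g\<times>'g \<Rightarrow> complex) \<Rightarrow> 'g\<times>'g\<times>'g \<Rightarrow> complex" where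
  "tens_T1 K T = (\<lambda>(a,b,c). T (a,b) * hone K c)"
definition tens_1T :: "'g set \<Rightarrow> ('g\<times>'g \<Rightarrow> complex) \<Rightarrow> 'g\<times>'g\<times>'g \<Rightarrow> complex" where
  "tens_1T K T = (\<lambda>(a,b,c). hone K a * T (b,c))"
definition Delta_id :: "('g,'b) monoid_scheme \<Rightarrow> 'g set \<Rightarrow> 'g set \<Rightarrow> ('g\<times>'g \<Rightarrow> complex) \<Rightarrow> 'g\<times>'g\<times>'g \<Rightarrow> complex" where
  "Delta_id G K M T = (\<lambda>(z,w,y). \<Sum>g\<in>carrier G. T (g,y) * dc G K M g z w)"
definition id_Delta :: "('g,'b) monoid_scheme \<Rightarrow> 'g set \<Rightarrow> 'g set \<Rightarrow> ('g\<times>'g \<Rightarrow> complex) \<Rightarrow> 'g\<times>'g\<times>'g \<Rightarrow> complex" where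
  "id_Delta G K M T = (\<lambda>(y,z,w). \<Sum>g\<in>carrier G. T (y,g) * dc G K M g z w)"
definition eps_id :: "('g,'b) monoid_scheme \<Rightarrow> 'g set \<Rightarrow> 'g set \<Rightarrow> ('g\<times>'g \<Rightarrow> complex) \<Rightarrow> 'g \<Rightarrow> complex" where
  "eps_id G K M T = (\<lambda>y. \<Sum>g\<in>carrier G. ec G K M g * T (g,y))"
definition id_eps :: "('g,'b) monoid_scheme \<Rightarrow> 'g set \<Rightarrow> 'g set \<Rightarrow> ('g\<times>'g \<Rightarrow> complex) \<Rightarrow> 'g \<Rightarrow> complex" where
  "id_eps G K M T = (\<lambda>y. \<Sum>g\<in>carrier G. T (y,g) * ec G K M g)"

definition tens_map :: "('g,'b) monoid_scheme \<Rightarrow> (('g \<Rightarrow> complex) \<Rightarrow> ('g \<Rightarrow> complex)) \<Rightarrow> ('g\<times>'g \<Rightarrow> complex) \<Rightarrow> 'g\<times>'g \<Rightarrow> complex" where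
  "tens_map G phi A = (\<lambda>(z,w). \<Sum>(g,h)\<in>carrier G \<times> carrier G. A (g,h) * phi (bas g) z * phi (bas h) w)"

definition alg_iso :: "('g,'b) monoid_scheme \<Rightarrow> 'g set \<Rightarrow> 'g set \<Rightarrow> 'g set \<Rightarrow> (('g \<Rightarrow> complex) \<Rightarrow> ('g \<Rightarrow> complex)) \<Rightarrow> bool" where
  "alg_iso G K' K M phi \<longleftrightarrow>
     bij_betw phi (Hsp G) (Hsp G) \<and>
     (\<forall>a\<in>Hsp G. \<forall>b\<in>Hsp G. phi (\<lambda>z. a z + b z) = (\<lambda>z. phi a z + phi b z)) \<and>
     (\<forall>c. \<forall>a\<in>Hsp G. phi (\<lambda>z. c * a z) = (\<lambda>z. c * phi a z)) \<and>
     (\<forall>a\<in>Hsp G. \<forall>b\<in>Hsp G. phi (hmul G K' M a b) = hmul G K M (phi a) (phi b)) \<and>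
     phi (hone K') = hone K"

definition quasi_iso :: "('g,'b) monoid_scheme \<Rightarrow> 'g set \<Rightarrow> 'g set \<Rightarrow> 'g set \<Rightarrow> (('g \<Rightarrow> complex) \<Rightarrow> ('g \<Rightarrow> complex)) \<Rightarrow> ('g\<times>'g \<Rightarrow> complex) \<Rightarrow> bool" where
  "quasi_iso G K' K M phi T \<longleftrightarrow>
     alg_iso G K' K M phi \<and>
     (\<exists>Ti. hmul2 G K M T Ti = hone2 K \<and> hmul2 G K M Ti T = hone2 K \<and>
        (\<forall>a\<in>Hsp G. tens_map G phi (hDelta G K' M a) = hmul2 G K M (hmul2 G K M T (hDelta G K M (phi a))) Ti)) \<and>
     hmul3 G K M (tens_T1 K T) (Delta_id G K M T) = hmul3 G K M (tens_1T K T) (id_Delta G K M T) \<and>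
     eps_id G K M T = hone K \<and> id_eps G K M T = hone K"

definition phi_sigma :: "('g,'b) monoid_scheme \<Rightarrow> 'g set \<Rightarrow> 'g set \<Rightarrow> ('g \<Rightarrow> 'g) \<Rightarrow> ('g \<Rightarrow> complex) \<Rightarrow> 'g \<Rightarrow> complex" where
  "phi_sigma G K M \<sigma> a = (\<lambda>z. \<Sum>u\<in>K. \<Sum>x\<in>M. if z = u \<otimes>\<^bsub>G\<^esub> x then a (\<sigma> u \<otimes>\<^bsub>G\<^esub> u \<otimes>\<^bsub>G\<^esub> x) else 0)"

definition T_sigma :: "('g,'b) monoid_scheme \<Rightarrow> 'g set \<Rightarrow> ('g \<Rightarrow> 'g) \<Rightarrow> 'g\<times>'g \<Rightarrow> complex" where
  "T_sigma G K \<sigma> = (\<lambda>(z,w). \<Sum>u\<in>K. \<Sum>v\<in>K. if z = u \<otimes>\<^bsub>G\<^esub> \<sigma> v \<and> w = v then 1 else 0)"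

end

theory Submission
  imports Defs
begin

definition Ssum :: "'i set \<Rightarrow> ('i \<Rightarrow> complex) \<Rightarrow> ('i \<Rightarrow> 'p) \<Rightarrow> 'p \<Rightarrow> complex" where
  "Ssum I c f = (\<lambda>p. \<Sum>i\<in>I. if p = f i then c i else 0)"

lemma Ssum_L1:
  assumes "finite P" "finite I" "f ` I \<subseteq> P"
  shows "(\<Sum>p\<in>P. Ssum I c f p * h p) = (\<Sum>i\<in>I. c i * h (f i))"
proof -
  have "(\<Sum>p\<in>P. Ssum I c f p * h p) = (\<Sum>p\<in>P. \<Sum>i\<in>I. (if p = f i then c i * h p else 0))"
    unfolding Ssum_def by (auto simp: sum_distrib_right intro!: sum.cong)
  also have "\<dots> = (\<Sum>i\<in>I. \<Sum>p\<in>P. (if p = f i then c i * h p else 0))"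
    by (rule sum.swap)
  also have "\<dots> = (\<Sum>i\<in>I. c i * h (f i))"
    using assms by (intro sum.cong) (auto simp: sum.delta')
  finally show ?thesis .
qed

lemma Ssum_bij:
  assumes "bij_betw h I J" "\<And>i. i\<in>I \<Longrightarrow> d (h i) = c i" "\<And>i. i\<in>I \<Longrightarrow> g (h i) = f i"
  shows "Ssum I c f = Ssum J d g"
proof
  fix p
  have "Ssum J d g p = (\<Sum>i\<in>I. if p = g (h i) then d (h i) else 0)"
    unfolding Ssum_def using sum.reindex_bij_betw[OF assms(1), of "\<lambda>j. if p = g j then d j else 0"]
    by simp
  also have "\<dots> = Ssum I c f p" unfolding Ssum_def using assms by (intro sum.cong) auto
  finally show "Ssum I c f p = Ssum J d g p" by simp
qed

lemma Ssum_filter: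
  assumes "finite I"
  shows "Ssum I (\<lambda>i. if P i then c i else 0) f = Ssum {i\<in>I. P i} c f"
  unfolding Ssum_def using assms
  by (auto simp: sum.inter_filter[symmetric] intro!: sum.cong)

lemma Ssum_cartesian:
  "Ssum (I \<times> J) c f = (\<lambda>p. \<Sum>i\<in>I. \<Sum>j\<in>J. if p = f (i,j) then c (i,j) else 0)"
  unfolding Ssum_def by (simp add: sum.cartesian_product)

lemma Ssum_L2:
  assumes "finite P" "finite Q" "finite I" "finite J" "f ` I \<subseteq> P" "g ` J \<subseteq> Q"
  shows "(\<Sum>p\<in>P. \<Sum>q\<in>Q. Ssum I c f p * Ssum J d g q * m p q) = (\<Sum>i\<in>I. \<Sum>j\<in>J. c i * d j * m (f i) (g j))"
proof -
  have "(\<Sum>p\<in>P. \<Sum>q\<in>Q. Ssum I c f p * Ssum J d g q * m p q)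
      = (\<Sum>p\<in>P. Ssum I c f p * (\<Sum>q\<in>Q. Ssum J d g q * m p q))"
    by (simp add: sum_distrib_left mult.assoc)
  also have "\<dots> = (\<Sum>p\<in>P. Ssum I c f p * (\<Sum>j\<in>J. d j * m p (g j)))"
    using assms by (simp add: Ssum_L1)
  also have "\<dots> = (\<Sum>i\<in>I. c i * (\<Sum>j\<in>J. d j * m (f i) (g j)))"
    using assms by (simp add: Ssum_L1)
  also have "\<dots> = (\<Sum>i\<in>I. \<Sum>j\<in>J. c i * d j * m (f i) (g j))"
    by (simp add: sum_distrib_left mult.assoc)
  finally show ?thesis .
qed

lemma Ssum_filter_pair:
  assumes "finite I" "finite J"
  shows "Ssum (I\<times>J) (\<lambda>(i,j). if P i j then c i j else 0) f = Ssum {(i,j). (i,j)\<in>I\<times>J \<and> P i j} (\<lambda>(i,j). c i j) f"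
proof -
  have e: "{(i,j). (i,j)\<in>I\<times>J \<and> P i j} = {x\<in>I\<times>J. case x of (i,j) \<Rightarrow> P i j}" by auto
  show ?thesis unfolding Ssum_def e using assms
    by (auto simp: sum.inter_filter intro!: ext sum.cong)
qed

definition okf :: "('g,'b) monoid_scheme \<Rightarrow> 'g set \<Rightarrow> 'g set \<Rightarrow> 'g \<Rightarrow> 'g \<Rightarrow> bool" where
  "okf G K M g h \<longleftrightarrow> actK G K M (fK G K M g) (fM G K M g) = fK G K M h"
definition mulf :: "('g,'b) monoid_scheme \<Rightarrow> 'g set \<Rightarrow> 'g set \<Rightarrow> 'g \<Rightarrow> 'g \<Rightarrow> 'g" where
  "mulf G K M g h = g \<otimes>\<^bsub>G\<^esub> fM G K M h"

lemma mc_eq: "mc G K M g h z = (if okf G K M g h \<and> z = mulf G K M g h then 1 else 0)"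
  unfolding mc_def okf_def mulf_def by simp

lemma hmul_Ssum:
  fixes G :: "('g,'b) monoid_scheme"
  assumes "finite (carrier G)" "finite I" "finite J" "f ` I \<subseteq> carrier G" "g ` J \<subseteq> carrier G"
  shows "hmul G K M (Ssum I c f) (Ssum J d g) =
     Ssum {(i,j)\<in>I\<times>J. okf G K M (f i) (g j)} (\<lambda>(i,j). c i * d j) (\<lambda>(i,j). mulf G K M (f i) (g j))"
proof
  fix z
  have "hmul G K M (Ssum I c f) (Ssum J d g) z = (\<Sum>i\<in>I. \<Sum>j\<in>J. c i * d j * mc G K M (f i) (g j) z)"
    unfolding hmul_def using assms by (simp add: Ssum_L2)
  also have "\<dots> = Ssum (I\<times>J) (\<lambda>(i,j). if okf G K M (f i) (g j) then c i * d j else 0) (\<lambda>(i,j). mulf G K M (f i) (g j)) z"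
    unfolding Ssum_cartesian mc_eq by (auto intro!: sum.cong)
  also have "\<dots> = Ssum {(i,j)\<in>I\<times>J. okf G K M (f i) (g j)} (\<lambda>(i,j). c i * d j) (\<lambda>(i,j). mulf G K M (f i) (g j)) z"
    using assms by (subst Ssum_filter_pair[symmetric]) (auto simp: case_prod_beta')
  finally show "hmul G K M (Ssum I c f) (Ssum J d g) z = \<dots>" .
qed

lemma hmul2_Ssum:
  fixes G :: "('g,'b) monoid_scheme"
  assumes "finite (carrier G)" "finite I" "finite J" "f ` I \<subseteq> carrier G \<times> carrier G" "g ` J \<subseteq> carrier G \<times> carrier G"
  shows "hmul2 G K M (Ssum I c f) (Ssum J d g) =
     Ssum {(i,j)\<in>I\<times>J. okf G K M (fst (f i)) (fst (g j)) \<and> okf G K M (snd (f i)) (snd (g j))} (\<lambda>(i,j). c i * d j)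
        (\<lambda>(i,j). (mulf G K M (fst (f i)) (fst (g j)), mulf G K M (snd (f i)) (snd (g j))))"
proof
  fix z :: "'g \<times> 'g"
  obtain z1 z2 where z: "z = (z1,z2)" by fastforce
  have "hmul2 G K M (Ssum I c f) (Ssum J d g) z = (\<Sum>p\<in>carrier G \<times> carrier G. \<Sum>q\<in>carrier G \<times> carrier G.
      Ssum I c f p * Ssum J d g q * (mc G K M (fst p) (fst q) z1 * mc G K M (snd p) (snd q) z2))"
    unfolding hmul2_def z by (simp add: case_prod_beta' mult.assoc)
  also have "\<dots> = (\<Sum>i\<in>I. \<Sum>j\<in>J. c i * d j * (mc G K M (fst (f i)) (fst (g j)) z1 * mc G K M (snd (f i)) (snd (g j)) z2))"
    using assms by (subst Ssum_L2) auto
  also have "\<dots> = Ssum (I\<times>J) (\<lambda>(i,j). if okf G K M (fst (f i)) (fst (g j)) \<and> okf G K M (snd (f i)) (snd (g j)) then c i * d j else 0)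
        (\<lambda>(i,j). (mulf G K M (fst (f i)) (fst (g j)), mulf G K M (snd (f i)) (snd (g j)))) z"
    unfolding Ssum_cartesian mc_eq z by (auto intro!: sum.cong)
  also have "\<dots> = Ssum {(i,j)\<in>I\<times>J. okf G K M (fst (f i)) (fst (g j)) \<and> okf G K M (snd (f i)) (snd (g j))} (\<lambda>(i,j). c i * d j)
        (\<lambda>(i,j). (mulf G K M (fst (f i)) (fst (g j)), mulf G K M (snd (f i)) (snd (g j)))) z"
    using assms by (subst Ssum_filter_pair[symmetric]) (auto simp: case_prod_beta')
  finally show "hmul2 G K M (Ssum I c f) (Ssum J d g) z = \<dots>" .
qed

lemma hmul3_Ssum:
  fixes G :: "('g,'b) monoid_scheme"
  assumes "finite (carrier G)" "finite I" "finite J" "f ` I \<subseteq> carrier G \<times> carrier G \<times> carrier G"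
    "g ` J \<subseteq> carrier G \<times> carrier G \<times> carrier G"
  shows "hmul3 G K M (Ssum I c f) (Ssum J d g) =
     Ssum {(i,j)\<in>I\<times>J. okf G K M (fst (f i)) (fst (g j)) \<and> okf G K M (fst (snd (f i))) (fst (snd (g j)))
          \<and> okf G K M (snd (snd (f i))) (snd (snd (g j)))} (\<lambda>(i,j). c i * d j)
        (\<lambda>(i,j). (mulf G K M (fst (f i)) (fst (g j)), mulf G K M (fst (snd (f i))) (fst (snd (g j))),
           mulf G K M (snd (snd (f i))) (snd (snd (g j)))))"
proof
  fix z :: "'g \<times> 'g \<times> 'g"
  obtain z1 z2 z3 where z: "z = (z1,z2,z3)" by (cases z) fastforce
  have "hmul3 G K M (Ssum I c f) (Ssum J d g) z = (\<Sum>p\<in>carrier G \<times> carrier G \<times> carrier G. \<Sum>q\<in>carrier G \<times> carrier G \<times> carrier G.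
      Ssum I c f p * Ssum J d g q * (mc G K M (fst p) (fst q) z1 * mc G K M (fst (snd p)) (fst (snd q)) z2
        * mc G K M (snd (snd p)) (snd (snd q)) z3))"
    unfolding hmul3_def z by (simp add: case_prod_beta' mult.assoc)
  also have "\<dots> = (\<Sum>i\<in>I. \<Sum>j\<in>J. c i * d j * (mc G K M (fst (f i)) (fst (g j)) z1 * mc G K M (fst (snd (f i))) (fst (snd (g j))) z2
        * mc G K M (snd (snd (f i))) (snd (snd (g j))) z3))"
    using assms by (subst Ssum_L2) auto
  also have "\<dots> = Ssum (I\<times>J) (\<lambda>(i,j). if okf G K M (fst (f i)) (fst (g j)) \<and> okf G K M (fst (snd (f i))) (fst (snd (g j)))
          \<and> okf G K M (snd (snd (f i))) (snd (snd (g j))) then c i * d j else 0)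
        (\<lambda>(i,j). (mulf G K M (fst (f i)) (fst (g j)), mulf G K M (fst (snd (f i))) (fst (snd (g j))),
           mulf G K M (snd (snd (f i))) (snd (snd (g j))))) z"
    unfolding Ssum_cartesian mc_eq z by (auto intro!: sum.cong)
  also have "\<dots> = Ssum {(i,j)\<in>I\<times>J. okf G K M (fst (f i)) (fst (g j)) \<and> okf G K M (fst (snd (f i))) (fst (snd (g j)))
          \<and> okf G K M (snd (snd (f i))) (snd (snd (g j)))} (\<lambda>(i,j). c i * d j)
        (\<lambda>(i,j). (mulf G K M (fst (f i)) (fst (g j)), mulf G K M (fst (snd (f i))) (fst (snd (g j))),
           mulf G K M (snd (snd (f i))) (snd (snd (g j))))) z"
    using assms by (subst Ssum_filter_pair[symmetric]) (auto simp: case_prod_beta')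
  finally show "hmul3 G K M (Ssum I c f) (Ssum J d g) z = \<dots>" .
qed

definition Dt :: "('g,'b) monoid_scheme \<Rightarrow> 'g set \<Rightarrow> 'g set \<Rightarrow> 'g \<Rightarrow> 'g \<Rightarrow> 'g \<times> 'g" where
  "Dt G K M g h = (fK G K M g \<otimes>\<^bsub>G\<^esub> inv\<^bsub>G\<^esub> h \<otimes>\<^bsub>G\<^esub> actM G K M h (fM G K M g), h \<otimes>\<^bsub>G\<^esub> fM G K M g)"

lemma dc_eq: "dc G K M g z w = (\<Sum>h\<in>K. if (z,w) = Dt G K M g h then 1 else 0)"
  unfolding dc_def Dt_def by simp

lemma Ssum_at_pair_fst: "Ssum I c f (g,y) = Ssum I (\<lambda>i. if snd (f i) = y then c i else 0) (\<lambda>i. fst (f i)) g"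
  unfolding Ssum_def by (intro sum.cong) (auto simp: prod_eq_iff)

lemma Ssum_at_pair_snd: "Ssum I c f (y,g) = Ssum I (\<lambda>i. if fst (f i) = y then c i else 0) (\<lambda>i. snd (f i)) g"
  unfolding Ssum_def by (intro sum.cong) (auto simp: prod_eq_iff)

lemma hDelta_Ssum:
  fixes G :: "('g,'b) monoid_scheme"
  assumes "finite (carrier G)" "finite I" "finite K" "f ` I \<subseteq> carrier G"
  shows "hDelta G K M (Ssum I c f) = Ssum (I\<times>K) (\<lambda>(i,h). c i) (\<lambda>(i,h). Dt G K M (f i) h)"
proof
  fix p :: "'g \<times> 'g"
  obtain z w where p: "p = (z,w)" by fastforce
  have "hDelta G K M (Ssum I c f) p = (\<Sum>i\<in>I. c i * dc G K M (f i) z w)"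
    unfolding hDelta_def p using assms by (simp add: Ssum_L1)
  also have "\<dots> = Ssum (I\<times>K) (\<lambda>(i,h). c i) (\<lambda>(i,h). Dt G K M (f i) h) p"
    unfolding Ssum_cartesian dc_eq p by (auto simp: sum_distrib_left intro!: sum.cong)
  finally show "hDelta G K M (Ssum I c f) p = \<dots>" .
qed

lemma Delta_id_Ssum:
  fixes G :: "('g,'b) monoid_scheme"
  assumes "finite (carrier G)" "finite I" "finite K" "f ` I \<subseteq> carrier G \<times> carrier G"
  shows "Delta_id G K M (Ssum I c f) = Ssum (I\<times>K) (\<lambda>(i,h). c i)
     (\<lambda>(i,h). (fst (Dt G K M (fst (f i)) h), snd (Dt G K M (fst (f i)) h), snd (f i)))"
proof
  fix p :: "'g \<times> 'g \<times> 'g"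
  obtain z w y where p: "p = (z,w,y)" by (cases p) fastforce
  have fi: "(\<lambda>i. fst (f i)) ` I \<subseteq> carrier G" using assms(4) by force
  have "Delta_id G K M (Ssum I c f) p = (\<Sum>i\<in>I. (if snd (f i) = y then c i else 0) * dc G K M (fst (f i)) z w)"
    unfolding Delta_id_def p Ssum_at_pair_fst using assms fi by (simp add: Ssum_L1)
  also have "\<dots> = Ssum (I\<times>K) (\<lambda>(i,h). c i)
     (\<lambda>(i,h). (fst (Dt G K M (fst (f i)) h), snd (Dt G K M (fst (f i)) h), snd (f i))) p"
    unfolding Ssum_cartesian dc_eq p by (auto simp: sum_distrib_left prod_eq_iff intro!: sum.cong)
  finally show "Delta_id G K M (Ssum I c f) p = \<dots>" .
qed

lemma id_Delta_Ssum:
  fixes G :: "('g,'b) monoid_scheme"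
  assumes "finite (carrier G)" "finite I" "finite K" "f ` I \<subseteq> carrier G \<times> carrier G"
  shows "id_Delta G K M (Ssum I c f) = Ssum (I\<times>K) (\<lambda>(i,h). c i)
     (\<lambda>(i,h). (fst (f i), fst (Dt G K M (snd (f i)) h), snd (Dt G K M (snd (f i)) h)))"
proof
  fix p :: "'g \<times> 'g \<times> 'g"
  obtain z w y where p: "p = (y,z,w)" by (cases p) fastforce
  have fi: "(\<lambda>i. snd (f i)) ` I \<subseteq> carrier G" using assms(4) by force
  have "id_Delta G K M (Ssum I c f) p = (\<Sum>i\<in>I. (if fst (f i) = y then c i else 0) * dc G K M (snd (f i)) z w)"
    unfolding id_Delta_def p Ssum_at_pair_snd using assms fi by (simp add: Ssum_L1)
  also have "\<dots> = Ssum (I\<times>K) (\<lambda>(i,h). c i)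
     (\<lambda>(i,h). (fst (f i), fst (Dt G K M (snd (f i)) h), snd (Dt G K M (snd (f i)) h))) p"
    unfolding Ssum_cartesian dc_eq p by (auto simp: sum_distrib_left prod_eq_iff intro!: sum.cong)
  finally show "id_Delta G K M (Ssum I c f) p = \<dots>" .
qed

lemma sum_delta_aux: "finite K \<Longrightarrow> (\<Sum>k'\<in>K. if P \<and> k = k' then x else 0) = (if k \<in> K \<and> P then x else 0)"
  by (cases P) (auto simp: sum.delta)

lemma tens_T1_Ssum:
  assumes "finite K"
  shows "tens_T1 K (Ssum I c f) = Ssum (I\<times>K) (\<lambda>(i,k). c i) (\<lambda>(i,k). (fst (f i), snd (f i), k))"
proof
  fix p :: "'a \<times> 'a \<times> 'a"
  obtain a b k where p: "p = (a,b,k)" by (cases p) fastforce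
  have "Ssum (I\<times>K) (\<lambda>(i,k). c i) (\<lambda>(i,k). (fst (f i), snd (f i), k)) p
     = (\<Sum>i\<in>I. \<Sum>k'\<in>K. if ((a,b) = f i) \<and> k = k' then c i else 0)"
    unfolding Ssum_cartesian p by (auto simp: prod_eq_iff intro!: sum.cong)
  also have "\<dots> = (\<Sum>i\<in>I. if k \<in> K \<and> (a,b) = f i then c i else 0)"
    using assms by (simp add: sum_delta_aux)
  also have "\<dots> = tens_T1 K (Ssum I c f) p"
    unfolding tens_T1_def p hone_def Ssum_def by (auto simp: sum_distrib_right intro!: sum.cong)
  finally show "tens_T1 K (Ssum I c f) p = Ssum (I\<times>K) (\<lambda>(i,k). c i) (\<lambda>(i,k). (fst (f i), snd (f i), k)) p" by simp
qed

lemma tens_1T_Ssum: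
  assumes "finite K"
  shows "tens_1T K (Ssum I c f) = Ssum (K\<times>I) (\<lambda>(k,i). c i) (\<lambda>(k,i). (k, fst (f i), snd (f i)))"
proof
  fix p :: "'a \<times> 'a \<times> 'a"
  obtain a b k where p: "p = (k,a,b)" by (cases p) fastforce
  have "Ssum (K\<times>I) (\<lambda>(k,i). c i) (\<lambda>(k,i). (k, fst (f i), snd (f i))) p
     = (\<Sum>k'\<in>K. \<Sum>i\<in>I. if ((a,b) = f i) \<and> k = k' then c i else 0)"
    unfolding Ssum_cartesian p by (auto simp: prod_eq_iff intro!: sum.cong)
  also have "\<dots> = (\<Sum>i\<in>I. \<Sum>k'\<in>K. if ((a,b) = f i) \<and> k = k' then c i else 0)"
    by (rule sum.swap)
  also have "\<dots> = (\<Sum>i\<in>I. if k \<in> K \<and> (a,b) = f i then c i else 0)"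
    using assms by (simp add: sum_delta_aux)
  also have "\<dots> = tens_1T K (Ssum I c f) p"
    unfolding tens_1T_def p hone_def Ssum_def by (auto simp: sum_distrib_left intro!: sum.cong)
  finally show "tens_1T K (Ssum I c f) p = Ssum (K\<times>I) (\<lambda>(k,i). c i) (\<lambda>(k,i). (k, fst (f i), snd (f i))) p" by simp
qed

lemma tens_map_Ssum:
  fixes G :: "('g,'b) monoid_scheme"
  assumes "finite (carrier G)" "finite I" "f ` I \<subseteq> carrier G \<times> carrier G"
    and ph: "\<And>g. g \<in> carrier G \<Longrightarrow> phi (bas g) = (\<lambda>z. if z = ps g then 1 else 0)"
  shows "tens_map G phi (Ssum I c f) = Ssum I c (\<lambda>i. (ps (fst (f i)), ps (snd (f i))))"
proof
  fix p :: "'g \<times> 'g"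
  obtain z w where p: "p = (z,w)" by fastforce
  have "tens_map G phi (Ssum I c f) p = (\<Sum>q\<in>carrier G \<times> carrier G. Ssum I c f q * (phi (bas (fst q)) z * phi (bas (snd q)) w))"
    unfolding tens_map_def p by (simp add: case_prod_beta' mult.assoc)
  also have "\<dots> = (\<Sum>i\<in>I. c i * (phi (bas (fst (f i))) z * phi (bas (snd (f i))) w))"
    using assms by (simp add: Ssum_L1)
  also have "\<dots> = Ssum I c (\<lambda>i. (ps (fst (f i)), ps (snd (f i)))) p"
    unfolding Ssum_def p using assms(3) by (intro sum.cong) (auto simp: ph mem_Times_iff)
  finally show "tens_map G phi (Ssum I c f) p = \<dots>" .
qed

lemma eps_id_Ssum:
  fixes G :: "('g,'b) monoid_scheme"
  assumes "finite (carrier G)" "finite I" "f ` I \<subseteq> carrier G \<times> carrier G"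
  shows "eps_id G K M (Ssum I c f) = Ssum I (\<lambda>i. c i * ec G K M (fst (f i))) (\<lambda>i. snd (f i))"
proof
  fix y
  have fi: "(\<lambda>i. fst (f i)) ` I \<subseteq> carrier G" using assms(3) by force
  have "eps_id G K M (Ssum I c f) y = (\<Sum>g\<in>carrier G. Ssum I (\<lambda>i. if snd (f i) = y then c i else 0) (\<lambda>i. fst (f i)) g * ec G K M g)"
    unfolding eps_id_def Ssum_at_pair_fst by (simp add: mult.commute)
  also have "\<dots> = Ssum I (\<lambda>i. c i * ec G K M (fst (f i))) (\<lambda>i. snd (f i)) y"
    using assms fi by (simp add: Ssum_L1) (auto simp: Ssum_def intro!: sum.cong)
  finally show "eps_id G K M (Ssum I c f) y = \<dots>" .
qed

lemma id_eps_Ssum: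
  fixes G :: "('g,'b) monoid_scheme"
  assumes "finite (carrier G)" "finite I" "f ` I \<subseteq> carrier G \<times> carrier G"
  shows "id_eps G K M (Ssum I c f) = Ssum I (\<lambda>i. c i * ec G K M (snd (f i))) (\<lambda>i. fst (f i))"
proof
  fix y
  have fi: "(\<lambda>i. snd (f i)) ` I \<subseteq> carrier G" using assms(3) by force
  have "id_eps G K M (Ssum I c f) y = (\<Sum>g\<in>carrier G. Ssum I (\<lambda>i. if fst (f i) = y then c i else 0) (\<lambda>i. snd (f i)) g * ec G K M g)"
    unfolding id_eps_def Ssum_at_pair_snd by simp
  also have "\<dots> = Ssum I (\<lambda>i. c i * ec G K M (snd (f i))) (\<lambda>i. fst (f i)) y"
    using assms fi by (simp add: Ssum_L1) (auto simp: Ssum_def intro!: sum.cong)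
  finally show "id_eps G K M (Ssum I c f) y = \<dots>" .
qed

lemma hone_Ssum: "finite K \<Longrightarrow> hone K = Ssum K (\<lambda>_. 1) id"
  unfolding hone_def Ssum_def by (auto intro!: ext)

lemma hone2_Ssum: "finite K \<Longrightarrow> hone2 K = Ssum (K\<times>K) (\<lambda>_. 1) id"
  unfolding hone2_def hone_def Ssum_def by (auto intro!: ext)

lemma Hsp_Ssum: "finite (carrier G) \<Longrightarrow> a \<in> Hsp G \<Longrightarrow> a = Ssum (carrier G) a id"
  unfolding Hsp_def Ssum_def by (auto intro!: ext)

lemma T_sigma_Ssum: "T_sigma G K \<sigma> = Ssum (K\<times>K) (\<lambda>_. 1) (\<lambda>(u,v). (u \<otimes>\<^bsub>G\<^esub> \<sigma> v, v))"
  unfolding T_sigma_def Ssum_cartesian by (auto intro!: ext sum.cong)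

locale ufac = group G for G :: "('g,'b) monoid_scheme" (structure) +
  fixes K M :: "'g set"
  assumes finG: "finite (carrier G)" and uf: "unique_factorization G K M"
begin

lemma subK: "subgroup K G" and subM: "subgroup M G"
  using uf unfolding unique_factorization_def by auto

lemma KC: "K \<subseteq> carrier G" and MC: "M \<subseteq> carrier G"
  using subK subM by (auto dest: subgroup.subset)

lemma KC': "u \<in> K \<Longrightarrow> u \<in> carrier G" and MC': "x \<in> M \<Longrightarrow> x \<in> carrier G"
  using KC MC by auto

lemma finK: "finite K" and finM: "finite M"
  using KC MC finG by (auto intro: finite_subset)

lemma K_mult: "u \<in> K \<Longrightarrow> v \<in> K \<Longrightarrow> u \<otimes> v \<in> K" and K_inv: "u \<in> K \<Longrightarrow> inv u \<in> K"
  and K_one: "\<one> \<in> K"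
  using subK by (auto intro: subgroup.m_closed subgroup.m_inv_closed subgroup.one_closed)

lemma M_mult: "u \<in> M \<Longrightarrow> v \<in> M \<Longrightarrow> u \<otimes> v \<in> M" and M_inv: "u \<in> M \<Longrightarrow> inv u \<in> M"
  and M_one: "\<one> \<in> M"
  using subM by (auto intro: subgroup.m_closed subgroup.m_inv_closed subgroup.one_closed)

lemma fact_ex: "g \<in> carrier G \<Longrightarrow> \<exists>u\<in>K. \<exists>x\<in>M. g = u \<otimes> x"
proof -
  assume "g \<in> carrier G"
  then obtain p where "fst p \<in> K \<and> snd p \<in> M \<and> g = fst p \<otimes> snd p"
    using uf unfolding unique_factorization_def by blast
  then show ?thesis by blast
qed

lemma fact_uniq:
  assumes "u \<in> K" "u' \<in> K" "x \<in> M" "x' \<in> M" "u \<otimes> x = u' \<otimes> x'"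
  shows "u = u' \<and> x = x'"
proof -
  have g: "u \<otimes> x \<in> carrier G" using assms KC MC by auto
  then have "\<exists>!p. fst p \<in> K \<and> snd p \<in> M \<and> u \<otimes> x = fst p \<otimes> snd p"
    using uf unfolding unique_factorization_def by blast
  then obtain p where p: "\<forall>q. fst q \<in> K \<and> snd q \<in> M \<and> u \<otimes> x = fst q \<otimes> snd q \<longrightarrow> q = p" by blast
  have "(u,x) = p" using p assms by auto
  moreover have "(u',x') = p" using p assms by auto
  ultimately show ?thesis by (metis fst_conv snd_conv)
qed

lemma KM1: "u \<in> K \<Longrightarrow> u \<in> M \<Longrightarrow> u = \<one>"
proof -
  assume a: "u \<in> K" "u \<in> M"
  have "u \<otimes> \<one> = \<one> \<otimes> u" using a KC' by simp
  then show "u = \<one>" using fact_uniq[of u \<one> \<one> u] K_one M_one a by blast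
qed

lemma fK_eq: assumes "u \<in> K" "x \<in> M" shows "fK G K M (u \<otimes> x) = u"
  unfolding fK_def
proof (rule the_equality)
  show "u \<in> K \<and> (\<exists>x'\<in>M. u \<otimes> x = u \<otimes> x')" using assms by blast
  fix v assume "v \<in> K \<and> (\<exists>y\<in>M. u \<otimes> x = v \<otimes> y)"
  then obtain y where "v \<in> K" "y \<in> M" "u \<otimes> x = v \<otimes> y" by blast
  then show "v = u" using fact_uniq[of u v x y] assms by simp
qed

lemma fM_eq: assumes "u \<in> K" "x \<in> M" shows "fM G K M (u \<otimes> x) = x"
  unfolding fM_def
proof (rule the_equality)
  show "x \<in> M \<and> (\<exists>u'\<in>K. u \<otimes> x = u' \<otimes> x)" using assms by blast
  fix y assume "y \<in> M \<and> (\<exists>v\<in>K. u \<otimes> x = v \<otimes> y)"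
  then obtain v where "v \<in> K" "y \<in> M" "u \<otimes> x = v \<otimes> y" by blast
  then show "y = x" using fact_uniq[of u v x y] assms by simp
qed

lemma fK_in: "g \<in> carrier G \<Longrightarrow> fK G K M g \<in> K"
proof -
  assume "g \<in> carrier G"
  then obtain u x where "u \<in> K" "x \<in> M" "g = u \<otimes> x" using fact_ex by blast
  then show ?thesis using fK_eq by simp
qed

lemma fM_in: "g \<in> carrier G \<Longrightarrow> fM G K M g \<in> M"
proof -
  assume "g \<in> carrier G"
  then obtain u x where "u \<in> K" "x \<in> M" "g = u \<otimes> x" using fact_ex by blast
  then show ?thesis using fM_eq by simp
qed

lemma fKM: "g \<in> carrier G \<Longrightarrow> fK G K M g \<otimes> fM G K M g = g"
proof -
  assume "g \<in> carrier G"
  then obtain u x where "u \<in> K" "x \<in> M" "g = u \<otimes> x" using fact_ex by blast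
  then show ?thesis using fK_eq fM_eq by simp
qed

lemma fact2_ex: "g \<in> carrier G \<Longrightarrow> \<exists>y\<in>M. \<exists>v\<in>K. g = y \<otimes> v"
proof -
  assume g: "g \<in> carrier G"
  then obtain u x where ux: "u \<in> K" "x \<in> M" "inv g = u \<otimes> x" using fact_ex[of "inv g"] by auto
  have "g = inv (inv g)" using g by simp
  also have "\<dots> = inv (u \<otimes> x)" using ux by simp
  also have "\<dots> = inv x \<otimes> inv u" using ux KC' MC' by (simp add: inv_mult_group)
  finally have "g = inv x \<otimes> inv u" .
  then show ?thesis using ux M_inv K_inv by blast
qed

lemma fact2_uniq:
  assumes "y \<in> M" "y' \<in> M" "v \<in> K" "v' \<in> K" "y \<otimes> v = y' \<otimes> v'"
  shows "y = y' \<and> v = v'"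
proof -
  have "inv v \<otimes> inv y = inv (y \<otimes> v)" using assms(1-4) KC' MC' by (simp add: inv_mult_group)
  also have "\<dots> = inv (y' \<otimes> v')" using assms by simp
  also have "\<dots> = inv v' \<otimes> inv y'" using assms(1-4) KC' MC' by (simp add: inv_mult_group)
  finally have "inv v \<otimes> inv y = inv v' \<otimes> inv y'" .
  then have h: "inv v = inv v' \<and> inv y = inv y'"
    using fact_uniq[OF K_inv[OF assms(3)] K_inv[OF assms(4)] M_inv[OF assms(1)] M_inv[OF assms(2)]] by blast
  have "v = inv (inv v)" using assms(3) KC' by simp
  also have "\<dots> = inv (inv v')" using h by simp
  also have "\<dots> = v'" using assms(4) KC' by simp
  finally have 1: "v = v'" .
  have "y = inv (inv y)" using assms(1) MC' by simp
  also have "\<dots> = inv (inv y')" using h by simp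
  also have "\<dots> = y'" using assms(2) MC' by simp
  finally show ?thesis using 1 by simp
qed

lemma act_ex: "u \<in> K \<Longrightarrow> x \<in> M \<Longrightarrow> \<exists>y\<in>M. \<exists>v\<in>K. u \<otimes> x = y \<otimes> v"
proof -
  assume "u \<in> K" "x \<in> M"
  then have "u \<otimes> x \<in> carrier G" using KC' MC' by simp
  then show ?thesis using fact2_ex by blast
qed

lemma actK_prop: assumes "u \<in> K" "x \<in> M"
  shows "actK G K M u x \<in> K \<and> (\<exists>y\<in>M. u \<otimes> x = y \<otimes> actK G K M u x)"
proof -
  obtain y v where yv: "y\<in>M" "v\<in>K" "u \<otimes> x = y \<otimes> v" using act_ex assms by blast
  have "actK G K M u x = v" unfolding actK_def
  proof (rule the_equality)
    show "v \<in> K \<and> (\<exists>y\<in>M. u \<otimes> x = y \<otimes> v)" using yv by blast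
    fix v' assume "v' \<in> K \<and> (\<exists>y\<in>M. u \<otimes> x = y \<otimes> v')"
    then obtain y' where "v' \<in> K" "y' \<in> M" "u \<otimes> x = y' \<otimes> v'" by blast
    then have "v' \<in> K" "y' \<in> M" "y' \<otimes> v' = y \<otimes> v" using yv(3) by (auto simp del: r_one l_one)
    then show "v' = v" using fact2_uniq[of y' y v' v] yv(1,2) by blast
  qed
  then show ?thesis using yv by auto
qed

lemma actM_prop: assumes "u \<in> K" "x \<in> M"
  shows "actM G K M u x \<in> M \<and> (\<exists>v\<in>K. u \<otimes> x = actM G K M u x \<otimes> v)"
proof -
  obtain y v where yv: "y\<in>M" "v\<in>K" "u \<otimes> x = y \<otimes> v" using act_ex assms by blast
  have "actM G K M u x = y" unfolding actM_def
  proof (rule the_equality)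
    show "y \<in> M \<and> (\<exists>v\<in>K. u \<otimes> x = y \<otimes> v)" using yv by blast
    fix y' assume "y' \<in> M \<and> (\<exists>v\<in>K. u \<otimes> x = y' \<otimes> v)"
    then obtain v' where "v' \<in> K" "y' \<in> M" "u \<otimes> x = y' \<otimes> v'" by blast
    then have "v' \<in> K" "y' \<in> M" "y' \<otimes> v' = y \<otimes> v" using yv(3) by (auto simp del: r_one l_one)
    then show "y' = y" using fact2_uniq[of y' y v' v] yv(1,2) by blast
  qed
  then show ?thesis using yv by auto
qed

lemma actK_in: "u \<in> K \<Longrightarrow> x \<in> M \<Longrightarrow> actK G K M u x \<in> K"
  using actK_prop by blast
lemma actM_in: "u \<in> K \<Longrightarrow> x \<in> M \<Longrightarrow> actM G K M u x \<in> M"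
  using actM_prop by blast

lemma act_eq: "u \<in> K \<Longrightarrow> x \<in> M \<Longrightarrow> u \<otimes> x = actM G K M u x \<otimes> actK G K M u x"
proof -
  assume a: "u \<in> K" "x \<in> M"
  obtain y where y: "y \<in> M" "u \<otimes> x = y \<otimes> actK G K M u x" using actK_prop[OF a] by blast
  obtain v where v: "v \<in> K" "u \<otimes> x = actM G K M u x \<otimes> v" using actM_prop[OF a] by blast
  have "y = actM G K M u x" using fact2_uniq[of y "actM G K M u x" "actK G K M u x" v] y v actK_prop[OF a] actM_prop[OF a]
    by auto
  then show ?thesis using y by simp
qed

lemma act_uniq:
  assumes "u \<in> K" "x \<in> M" "y \<in> M" "v \<in> K" "u \<otimes> x = y \<otimes> v"
  shows "actM G K M u x = y" "actK G K M u x = v"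
proof -
  have e: "actM G K M u x \<otimes> actK G K M u x = y \<otimes> v" using act_eq[OF assms(1,2)] assms(5) by simp
  have "actM G K M u x = y \<and> actK G K M u x = v"
    by (rule fact2_uniq[OF actM_in[OF assms(1,2)] assms(3) actK_in[OF assms(1,2)] assms(4) e])
  then show "actM G K M u x = y" "actK G K M u x = v" by auto
qed

lemma actK_one: "u \<in> K \<Longrightarrow> actK G K M u \<one> = u"
  using act_uniq[of u \<one> \<one> u] M_one KC' by auto
lemma actM_one: "u \<in> K \<Longrightarrow> actM G K M u \<one> = \<one>"
  using act_uniq[of u \<one> \<one> u] M_one KC' by auto

lemma act_mult:
  assumes "u \<in> K" "x \<in> M" "y \<in> M"
  shows "actK G K M u (x \<otimes> y) = actK G K M (actK G K M u x) y"
    and "actM G K M u (x \<otimes> y) = actM G K M u x \<otimes> actM G K M (actK G K M u x) y"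
proof -
  define a where "a = actM G K M u x"
  define b where "b = actK G K M u x"
  have ab: "a \<in> M" "b \<in> K" "u \<otimes> x = a \<otimes> b" unfolding a_def b_def
    using actK_in[OF assms(1,2)] actM_in[OF assms(1,2)] act_eq[OF assms(1,2)] by auto
  have eq: "u \<otimes> (x \<otimes> y) = (a \<otimes> actM G K M b y) \<otimes> actK G K M b y"
  proof -
    have "u \<otimes> (x \<otimes> y) = (u \<otimes> x) \<otimes> y" using assms KC' MC' by (simp add: m_assoc)
    also have "\<dots> = (a \<otimes> b) \<otimes> y" using ab by simp
    also have "\<dots> = a \<otimes> (b \<otimes> y)" using ab assms KC' MC' by (simp add: m_assoc)
    also have "\<dots> = a \<otimes> (actM G K M b y \<otimes> actK G K M b y)" using act_eq[OF ab(2) assms(3)] by simp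
    also have "\<dots> = (a \<otimes> actM G K M b y) \<otimes> actK G K M b y"
      using ab assms actK_in actM_in KC' MC' by (simp add: m_assoc)
    finally show ?thesis .
  qed
  have xy: "x \<otimes> y \<in> M" using assms M_mult by auto
  have i1: "a \<otimes> actM G K M b y \<in> M" using ab assms actM_in M_mult by auto
  have i2: "actK G K M b y \<in> K" using ab assms actK_in by auto
  show "actK G K M u (x \<otimes> y) = actK G K M (actK G K M u x) y"
    using act_uniq(2)[OF assms(1) xy i1 i2 eq] unfolding b_def .
  show "actM G K M u (x \<otimes> y) = actM G K M u x \<otimes> actM G K M (actK G K M u x) y"
    using act_uniq(1)[OF assms(1) xy i1 i2 eq] unfolding a_def b_def .
qed

lemma actK_inv: "u \<in> K \<Longrightarrow> x \<in> M \<Longrightarrow> actK G K M (actK G K M u x) (inv x) = u"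
proof -
  assume a: "u \<in> K" "x \<in> M"
  have "actK G K M (actK G K M u x) (inv x) = actK G K M u (x \<otimes> inv x)"
    using act_mult(1)[of u x "inv x"] a M_inv by simp
  also have "\<dots> = u" using a MC' actK_one by simp
  finally show ?thesis .
qed

lemma actK_solve: "u \<in> K \<Longrightarrow> a \<in> K \<Longrightarrow> x \<in> M \<Longrightarrow> actK G K M u x = a \<longleftrightarrow> u = actK G K M a (inv x)"
proof -
  assume h: "u \<in> K" "a \<in> K" "x \<in> M"
  have 1: "actK G K M (actK G K M u x) (inv x) = u" using actK_inv h by simp
  have 2: "actK G K M (actK G K M a (inv x)) x = a" using actK_inv[of a "inv x"] h M_inv MC' by simp
  show ?thesis using 1 2 by metis
qed

end

locale two = ufac G K M for G :: "('g,'b) monoid_scheme" (structure) and K M +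
  fixes K' :: "'g set" and \<sigma> :: "'g \<Rightarrow> 'g"
  assumes uf': "unique_factorization G K' M" and sigM: "\<forall>u\<in>K. \<sigma> u \<in> M"
    and K'def: "K' = {\<sigma> u \<otimes> u | u. u \<in> K}"
begin

sublocale P: ufac G K' M by unfold_locales (rule finG, rule uf')

definition kp where "kp u = \<sigma> u \<otimes> u"

lemma sig_in: "u \<in> K \<Longrightarrow> \<sigma> u \<in> M" using sigM by auto
lemma sig_C: "u \<in> K \<Longrightarrow> \<sigma> u \<in> carrier G" using sig_in MC' by auto

lemma kp_in: "u \<in> K \<Longrightarrow> kp u \<in> K'" unfolding kp_def K'def by auto
lemma kp_C: "u \<in> K \<Longrightarrow> kp u \<in> carrier G" using kp_in P.KC' by auto
lemma K'_ex: "k \<in> K' \<Longrightarrow> \<exists>u\<in>K. k = kp u" unfolding kp_def K'def by auto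

lemma kp_inj: "u \<in> K \<Longrightarrow> v \<in> K \<Longrightarrow> kp u = kp v \<Longrightarrow> u = v"
  unfolding kp_def using fact2_uniq sig_in by blast

lemma kp_coset:
  assumes "k \<in> K'" "d \<in> K" "k \<otimes> inv d \<in> M"
  shows "k = kp d"
proof -
  obtain e where e: "e \<in> K" "k = \<sigma> e \<otimes> e" using K'_ex[OF assms(1)] unfolding kp_def by auto
  have "e \<otimes> inv d = inv (\<sigma> e) \<otimes> (k \<otimes> inv d)"
    using e assms sig_C KC' by (simp add: m_assoc[symmetric] l_inv)
  also have "\<dots> \<in> M" using assms e sig_in M_mult M_inv by auto
  finally have "e \<otimes> inv d \<in> M" .
  moreover have "e \<otimes> inv d \<in> K" using e assms K_mult K_inv by auto
  ultimately have "e \<otimes> inv d = \<one>" using KM1 by auto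
  moreover have "e = (e \<otimes> inv d) \<otimes> d" using e assms KC' by (simp add: m_assoc)
  ultimately have "e = d" using assms KC' by simp
  then show ?thesis using e kp_def by simp
qed

lemma sig_one: "\<sigma> \<one> = \<one>"
proof -
  have "kp \<one> \<in> K'" using kp_in K_one by auto
  moreover have "kp \<one> = \<sigma> \<one>" unfolding kp_def using sig_C K_one by simp
  ultimately have "\<sigma> \<one> \<in> K'" by simp
  then show ?thesis using P.KM1[OF _ sig_in[OF K_one]] by blast
qed

lemma P_act:
  assumes u: "u \<in> K" and x: "x \<in> M"
  shows "actK G K' M (kp u) x = kp (actK G K M u x)"
    and "actM G K' M (kp u) x = \<sigma> u \<otimes> actM G K M u x \<otimes> inv (\<sigma> (actK G K M u x))"
proof -
  define a where "a = actM G K M u x"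
  define b where "b = actK G K M u x"
  have ab: "a \<in> M" "b \<in> K" "u \<otimes> x = a \<otimes> b" unfolding a_def b_def using u x actK_in actM_in act_eq by auto
  have C: "a \<in> carrier G" "b \<in> carrier G" "u \<in> carrier G" "x \<in> carrier G" "\<sigma> u \<in> carrier G" "\<sigma> b \<in> carrier G"
    using ab u x KC' MC' sig_C by auto
  have eq: "kp u \<otimes> x = (\<sigma> u \<otimes> a \<otimes> inv (\<sigma> b)) \<otimes> kp b"
  proof -
    have "kp u \<otimes> x = \<sigma> u \<otimes> (u \<otimes> x)" unfolding kp_def using C by (simp add: m_assoc)
    also have "\<dots> = \<sigma> u \<otimes> (a \<otimes> b)" using ab by simp
    also have "\<dots> = (\<sigma> u \<otimes> a \<otimes> inv (\<sigma> b)) \<otimes> (\<sigma> b \<otimes> b)" using C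
      by (simp add: m_assoc[symmetric]) (simp add: m_assoc)
    finally show ?thesis unfolding kp_def .
  qed
  have m: "\<sigma> u \<otimes> a \<otimes> inv (\<sigma> b) \<in> M" using ab u sig_in M_mult M_inv by auto
  show "actK G K' M (kp u) x = kp (actK G K M u x)"
    using P.act_uniq(2)[OF kp_in[OF u] x m kp_in[OF ab(2)] eq] b_def by simp
  show "actM G K' M (kp u) x = \<sigma> u \<otimes> actM G K M u x \<otimes> inv (\<sigma> (actK G K M u x))"
    using P.act_uniq(1)[OF kp_in[OF u] x m kp_in[OF ab(2)] eq] a_def b_def by simp
qed

lemma key:
  assumes a: "a \<in> K" and b: "b \<in> K"
  shows "\<sigma> a \<otimes> actM G K M a (\<sigma> b) = \<sigma> (actK G K M a (\<sigma> b) \<otimes> b)"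
proof -
  define y where "y = actM G K M a (\<sigma> b)"
  define v where "v = actK G K M a (\<sigma> b)"
  have yv: "y \<in> M" "v \<in> K" "a \<otimes> \<sigma> b = y \<otimes> v" unfolding y_def v_def
    using a b sig_in actK_in actM_in act_eq by auto
  define d where "d = v \<otimes> b"
  have d: "d \<in> K" using yv b K_mult d_def by auto
  have C: "a \<in> carrier G" "b \<in> carrier G" "y \<in> carrier G" "v \<in> carrier G" "\<sigma> a \<in> carrier G" "\<sigma> b \<in> carrier G"
    "d \<in> carrier G"
    using yv a b d KC' MC' sig_C by auto
  have eq: "kp a \<otimes> kp b = (\<sigma> a \<otimes> y) \<otimes> d"
  proof -
    have "kp a \<otimes> kp b = \<sigma> a \<otimes> (a \<otimes> \<sigma> b) \<otimes> b" unfolding kp_def using C by (simp add: m_assoc)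
    also have "\<dots> = \<sigma> a \<otimes> (y \<otimes> v) \<otimes> b" using yv by simp
    also have "\<dots> = (\<sigma> a \<otimes> y) \<otimes> d" unfolding d_def using C by (simp add: m_assoc)
    finally show ?thesis .
  qed
  have inK': "kp a \<otimes> kp b \<in> K'" using kp_in a b P.K_mult by auto
  have "kp a \<otimes> kp b \<otimes> inv d = \<sigma> a \<otimes> y" using eq C by (simp add: m_assoc)
  also have "\<dots> \<in> M" using yv a sig_in M_mult by auto
  finally have "kp a \<otimes> kp b = kp d" using kp_coset[OF inK' d] by auto
  then have "(\<sigma> a \<otimes> y) \<otimes> d = \<sigma> d \<otimes> d" using eq kp_def by simp
  then have "\<sigma> a \<otimes> y = \<sigma> d" using C sig_C d by (metis right_cancel m_closed)
  then show ?thesis unfolding y_def d_def v_def .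
qed

definition psi where "psi g = \<sigma> (fK G K M g) \<otimes> g"

lemma psi_eq: "u \<in> K \<Longrightarrow> x \<in> M \<Longrightarrow> psi (u \<otimes> x) = kp u \<otimes> x"
  unfolding psi_def kp_def using fK_eq sig_C KC' MC' by (simp add: m_assoc)

lemma psi_C: "g \<in> carrier G \<Longrightarrow> psi g \<in> carrier G"
  unfolding psi_def using fK_in sig_C by auto

lemma psi_fact: "g \<in> carrier G \<Longrightarrow> psi g = kp (fK G K M g) \<otimes> fM G K M g"
  using psi_eq[of "fK G K M g" "fM G K M g"] fKM fK_in fM_in by simp

lemma psi_fK: "g \<in> carrier G \<Longrightarrow> fK G K' M (psi g) = kp (fK G K M g)"
  using psi_fact P.fK_eq kp_in fK_in fM_in by simp
lemma psi_fM: "g \<in> carrier G \<Longrightarrow> fM G K' M (psi g) = fM G K M g"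
  using psi_fact P.fM_eq kp_in fK_in fM_in by simp

lemma psi_inj: "inj_on psi (carrier G)"
proof
  fix g h assume g: "g \<in> carrier G" and h: "h \<in> carrier G" and e: "psi g = psi h"
  have "kp (fK G K M g) = kp (fK G K M h)" using psi_fK[OF g] psi_fK[OF h] e by simp
  then have 1: "fK G K M g = fK G K M h" using kp_inj fK_in g h by blast
  have 2: "fM G K M g = fM G K M h" using psi_fM[OF g] psi_fM[OF h] e by simp
  show "g = h" using fKM[OF g] fKM[OF h] 1 2 by metis
qed

lemma psi_surj: "psi ` carrier G = carrier G"
proof
  show "psi ` carrier G \<subseteq> carrier G" using psi_C by auto
  show "carrier G \<subseteq> psi ` carrier G"
  proof
    fix g assume g: "g \<in> carrier G"
    obtain u where u: "u \<in> K" "fK G K' M g = kp u" using K'_ex P.fK_in g by blast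
    have "psi (u \<otimes> fM G K' M g) = g" using psi_eq u P.fM_in g P.fKM by metis
    moreover have "u \<otimes> fM G K' M g \<in> carrier G" using u P.fM_in g KC' MC' by auto
    ultimately show "g \<in> psi ` carrier G" by (metis image_eqI)
  qed
qed

lemma psi_bij: "bij_betw psi (carrier G) (carrier G)"
  using psi_inj psi_surj bij_betw_def by blast

definition psinv where "psinv = the_inv_into (carrier G) psi"

lemma psinv_psi: "g \<in> carrier G \<Longrightarrow> psinv (psi g) = g"
  unfolding psinv_def using psi_inj by (simp add: the_inv_into_f_f)
lemma psi_psinv: "g \<in> carrier G \<Longrightarrow> psi (psinv g) = g"
  unfolding psinv_def using psi_inj psi_surj by (simp add: f_the_inv_into_f)
lemma psinv_C: "g \<in> carrier G \<Longrightarrow> psinv g \<in> carrier G"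
  unfolding psinv_def using psi_inj psi_surj by (metis the_inv_into_into order_refl)
lemma psinv_eq: "g \<in> carrier G \<Longrightarrow> psi g = h \<Longrightarrow> psinv h = g"
  using psinv_psi by auto

lemma phi_eq: "phi_sigma G K M \<sigma> a = (\<lambda>z. if z \<in> carrier G then a (psi z) else 0)"
proof
  fix z
  show "phi_sigma G K M \<sigma> a z = (if z \<in> carrier G then a (psi z) else 0)"
  proof (cases "z \<in> carrier G")
    case True
    have "phi_sigma G K M \<sigma> a z = (\<Sum>u\<in>K. \<Sum>x\<in>M. if u = fK G K M z then (if x = fM G K M z then a (psi (u \<otimes> x)) else 0) else 0)"
      unfolding phi_sigma_def
    proof (intro sum.cong refl)
      fix u x assume u: "u \<in> K" and x: "x \<in> M"
      have "z = u \<otimes> x \<longleftrightarrow> u = fK G K M z \<and> x = fM G K M z"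
        using u x fK_eq fM_eq fKM True by metis
      moreover have "\<sigma> u \<otimes> u \<otimes> x = psi (u \<otimes> x)" using psi_eq u x kp_def by simp
      ultimately show "(if z = u \<otimes> x then a (\<sigma> u \<otimes> u \<otimes> x) else 0) =
          (if u = fK G K M z then if x = fM G K M z then a (psi (u \<otimes> x)) else 0 else 0)" by auto
    qed
    also have "\<dots> = (\<Sum>u\<in>K. if u = fK G K M z then (\<Sum>x\<in>M. if x = fM G K M z then a (psi (u \<otimes> x)) else 0) else 0)"
      by (intro sum.cong) auto
    also have "\<dots> = a (psi (fK G K M z \<otimes> fM G K M z))"
      using True fK_in fM_in finK finM by (simp add: sum.delta)
    also have "\<dots> = a (psi z)" using fKM True by simp
    finally show ?thesis using True by simp
  next
    case False
    then have "\<And>u x. u \<in> K \<Longrightarrow> x \<in> M \<Longrightarrow> z \<noteq> u \<otimes> x" using KC' MC' by auto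
    then show ?thesis using False unfolding phi_sigma_def by (auto intro!: sum.neutral)
  qed
qed

lemma phi_bas: "g \<in> carrier G \<Longrightarrow> phi_sigma G K M \<sigma> (bas g) = (\<lambda>z. if z = psinv g then 1 else 0)"
  unfolding phi_eq bas_def using psinv_psi psi_psinv psinv_C by (auto intro!: ext)

end

lemma Ssum_cong: "I = J \<Longrightarrow> (\<And>i. i \<in> I \<Longrightarrow> c i = d i) \<Longrightarrow> (\<And>i. i \<in> I \<Longrightarrow> f i = g i) \<Longrightarrow> Ssum I c f = Ssum J d g"
  unfolding Ssum_def by (auto intro!: ext sum.cong)

lemma Ssum_byW:
  assumes "\<And>i. i \<in> I \<Longrightarrow> h i \<in> J" "\<And>j. j \<in> J \<Longrightarrow> p j \<in> I" "\<And>j. j \<in> J \<Longrightarrow> h (p j) = j"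
    "\<And>i. i \<in> I \<Longrightarrow> p (h i) = i"
    "\<And>i. i\<in>I \<Longrightarrow> d (h i) = c i" "\<And>i. i\<in>I \<Longrightarrow> g (h i) = f i"
  shows "Ssum I c f = Ssum J d g"
proof (rule Ssum_bij[of h])
  show "bij_betw h I J" by (rule bij_betw_byWitness[of I p]) (use assms in auto)
qed (use assms in auto)

context ufac
begin

lemma fK_eq2: "u \<in> K \<Longrightarrow> x \<in> M \<Longrightarrow> y \<in> M \<Longrightarrow> fK G K M (u \<otimes> x \<otimes> y) = u"
  using fK_eq[of u "x \<otimes> y"] M_mult KC' MC' by (simp add: m_assoc)
lemma fM_eq2: "u \<in> K \<Longrightarrow> x \<in> M \<Longrightarrow> y \<in> M \<Longrightarrow> fM G K M (u \<otimes> x \<otimes> y) = x \<otimes> y"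
  using fM_eq[of u "x \<otimes> y"] M_mult KC' MC' by (simp add: m_assoc)
lemma fKK: "u \<in> K \<Longrightarrow> fK G K M u = u"
  using fK_eq[of u \<one>] M_one KC' by simp
lemma fMK: "u \<in> K \<Longrightarrow> fM G K M u = \<one>"
  using fM_eq[of u \<one>] M_one KC' by simp
lemma actK_inv2: "a \<in> K \<Longrightarrow> x \<in> M \<Longrightarrow> actK G K M (actK G K M a (inv x)) x = a"
  using actK_inv[of a "inv x"] M_inv MC' by simp

lemma bij_KM: "bij_betw (\<lambda>(u,x). u \<otimes> x) (K \<times> M) (carrier G)"
proof (rule bij_betw_imageI)
  show "inj_on (\<lambda>(u,x). u \<otimes> x) (K \<times> M)"
    by (auto simp: inj_on_def dest: fact_uniq)
  show "(\<lambda>(u,x). u \<otimes> x) ` (K \<times> M) = carrier G"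
  proof
    show "(\<lambda>(u,x). u \<otimes> x) ` (K \<times> M) \<subseteq> carrier G" using KC' MC' by auto
    show "carrier G \<subseteq> (\<lambda>(u,x). u \<otimes> x) ` (K \<times> M)"
    proof
      fix g assume "g \<in> carrier G"
      then obtain u x where "u \<in> K" "x \<in> M" "g = u \<otimes> x" using fact_ex by blast
      then show "g \<in> (\<lambda>(u,x). u \<otimes> x) ` (K \<times> M)" by force
    qed
  qed
qed

lemma Ssum_C: "Ssum (carrier G) b id = (\<lambda>z. if z \<in> carrier G then b z else 0)"
  unfolding Ssum_def using finG by (auto intro!: ext simp: sum.delta)

lemma Ssum_KM: "(\<lambda>z. if z \<in> carrier G then b z else 0) = Ssum (K\<times>M) (\<lambda>(u,x). b (u \<otimes> x)) (\<lambda>(u,x). u \<otimes> x)"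
  unfolding Ssum_C[symmetric]
  by (rule sym, rule Ssum_bij[OF bij_KM]) auto

end

context two
begin

lemmas memI = K_mult K_inv K_one M_mult M_inv M_one sig_in actK_in actM_in KC' MC' sig_C kp_in kp_C
  P.KC' inv_closed m_closed

lemma kpfK: "u \<in> K \<Longrightarrow> x \<in> M \<Longrightarrow> fK G K' M (kp u \<otimes> x) = kp u"
  using P.fK_eq kp_in by simp
lemma kpfM: "u \<in> K \<Longrightarrow> x \<in> M \<Longrightarrow> fM G K' M (kp u \<otimes> x) = x"
  using P.fM_eq kp_in by simp
lemma kpfK2: "u \<in> K \<Longrightarrow> x \<in> M \<Longrightarrow> y \<in> M \<Longrightarrow> fK G K' M (kp u \<otimes> x \<otimes> y) = kp u"
  using P.fK_eq2 kp_in by simp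
lemma kpfM2: "u \<in> K \<Longrightarrow> x \<in> M \<Longrightarrow> y \<in> M \<Longrightarrow> fM G K' M (kp u \<otimes> x \<otimes> y) = x \<otimes> y"
  using P.fM_eq2 kp_in by simp

lemma psinv_kp: "u \<in> K \<Longrightarrow> x \<in> M \<Longrightarrow> psinv (kp u \<otimes> x) = u \<otimes> x"
  using psinv_eq[of "u \<otimes> x" "kp u \<otimes> x"] psi_eq KC' MC' by simp
lemma psinv_kp2: "u \<in> K \<Longrightarrow> x \<in> M \<Longrightarrow> y \<in> M \<Longrightarrow> psinv (kp u \<otimes> x \<otimes> y) = u \<otimes> x \<otimes> y"
  using psinv_kp[of u "x \<otimes> y"] M_mult KC' MC' kp_C by (simp add: m_assoc)

lemma bij_KM': "bij_betw (\<lambda>(u,x). kp u \<otimes> x) (K \<times> M) (carrier G)"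
proof -
  have "bij_betw (psi \<circ> (\<lambda>(u,x). u \<otimes> x)) (K \<times> M) (carrier G)"
    using bij_betw_trans[OF bij_KM psi_bij] .
  moreover have "\<And>p. p \<in> K \<times> M \<Longrightarrow> (psi \<circ> (\<lambda>(u,x). u \<otimes> x)) p = (\<lambda>(u,x). kp u \<otimes> x) p"
    using psi_eq by auto
  ultimately show ?thesis using bij_betw_cong by blast
qed

lemma Ssum_KM': "(\<lambda>z. if z \<in> carrier G then b z else 0) = Ssum (K\<times>M) (\<lambda>(u,x). b (kp u \<otimes> x)) (\<lambda>(u,x). kp u \<otimes> x)"
  unfolding Ssum_C[symmetric]
  by (rule sym, rule Ssum_bij[OF bij_KM']) auto

lemma Hsp_if: "a \<in> Hsp G \<Longrightarrow> a = (\<lambda>z. if z \<in> carrier G then a z else 0)"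
  unfolding Hsp_def by auto

lemma Hsp_KM': "a \<in> Hsp G \<Longrightarrow> a = Ssum (K\<times>M) (\<lambda>(u,x). a (kp u \<otimes> x)) (\<lambda>(u,x). kp u \<otimes> x)"
  using Hsp_if Ssum_KM' by metis

lemma phi_KM: "phi_sigma G K M \<sigma> a = Ssum (K\<times>M) (\<lambda>(u,x). a (kp u \<otimes> x)) (\<lambda>(u,x). u \<otimes> x)"
  unfolding phi_eq Ssum_KM[of "\<lambda>z. a (psi z)"] using psi_eq
  by (intro Ssum_cong) auto

lemma phi_Ssum:
  assumes "f ` I \<subseteq> carrier G"
  shows "phi_sigma G K M \<sigma> (Ssum I c f) = Ssum I c (\<lambda>i. psinv (f i))"
proof
  fix z
  show "phi_sigma G K M \<sigma> (Ssum I c f) z = Ssum I c (\<lambda>i. psinv (f i)) z"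
  proof (cases "z \<in> carrier G")
    case True
    have "\<And>i. i \<in> I \<Longrightarrow> (psi z = f i) = (z = psinv (f i))"
      using True assms psinv_psi psi_psinv by (metis image_subset_iff)
    then show ?thesis unfolding phi_eq Ssum_def using True by (auto intro!: sum.cong)
  next
    case False
    have "\<And>i. i \<in> I \<Longrightarrow> z \<noteq> psinv (f i)" using False assms psinv_C by blast
    then show ?thesis unfolding phi_eq Ssum_def using False by (auto intro!: sum.neutral)
  qed
qed

lemma kp_eq_iff: "u \<in> K \<Longrightarrow> v \<in> K \<Longrightarrow> kp u = kp v \<longleftrightarrow> u = v"
  using kp_inj by blast

lemma imKM: "(\<lambda>(u,x). u \<otimes> x) ` (K \<times> M) \<subseteq> carrier G" using KC' MC' by auto
lemma imKM': "(\<lambda>(u,x). kp u \<otimes> x) ` (K \<times> M) \<subseteq> carrier G" using kp_C MC' by auto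
lemma finKM: "finite (K \<times> M)" using finK finM by simp

lemma phi_hom:
  assumes a: "a \<in> Hsp G" and b: "b \<in> Hsp G"
  shows "phi_sigma G K M \<sigma> (hmul G K' M a b) = hmul G K M (phi_sigma G K M \<sigma> a) (phi_sigma G K M \<sigma> b)"
proof -
  define A where "A = (\<lambda>(u,x). a (kp u \<otimes> x))"
  define B where "B = (\<lambda>(u,x). b (kp u \<otimes> x))"
  define F1 where "F1 = (\<lambda>(u,x). kp u \<otimes> x)"
  define E where "E = (\<lambda>(u::'g,x::'g). u \<otimes> x)"
  have eA: "a = Ssum (K\<times>M) A F1" using Hsp_KM'[OF a] unfolding A_def F1_def .
  have eB: "b = Ssum (K\<times>M) B F1" using Hsp_KM'[OF b] unfolding B_def F1_def .
  have pA: "phi_sigma G K M \<sigma> a = Ssum (K\<times>M) A E" using phi_KM unfolding A_def E_def .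
  have pB: "phi_sigma G K M \<sigma> b = Ssum (K\<times>M) B E" using phi_KM unfolding B_def E_def .
  have iF1: "F1 ` (K \<times> M) \<subseteq> carrier G" using imKM' F1_def by simp
  have iE: "E ` (K \<times> M) \<subseteq> carrier G" using imKM E_def by simp
  have L: "hmul G K' M a b = Ssum {(i,j). (i,j) \<in> (K\<times>M)\<times>(K\<times>M) \<and> okf G K' M (F1 i) (F1 j)} (\<lambda>(i,j). A i * B j)
      (\<lambda>(i,j). mulf G K' M (F1 i) (F1 j))"
    unfolding eA eB using hmul_Ssum[OF finG finKM finKM iF1 iF1] by simp
  have R: "hmul G K M (phi_sigma G K M \<sigma> a) (phi_sigma G K M \<sigma> b) = Ssum {(i,j). (i,j) \<in> (K\<times>M)\<times>(K\<times>M) \<and> okf G K M (E i) (E j)} (\<lambda>(i,j). A i * B j)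
      (\<lambda>(i,j). mulf G K M (E i) (E j))"
    unfolding pA pB using hmul_Ssum[OF finG finKM finKM iE iE] by simp
  have im: "(\<lambda>(i,j). mulf G K' M (F1 i) (F1 j)) ` {(i,j). (i,j) \<in> (K\<times>M)\<times>(K\<times>M) \<and> okf G K' M (F1 i) (F1 j)} \<subseteq> carrier G"
    unfolding F1_def mulf_def by (auto simp: kpfM memI)
  show ?thesis unfolding L R phi_Ssum[OF im]
  proof (rule Ssum_cong)
    show "{(i,j). (i,j) \<in> (K\<times>M)\<times>(K\<times>M) \<and> okf G K' M (F1 i) (F1 j)} = {(i,j). (i,j) \<in> (K\<times>M)\<times>(K\<times>M) \<and> okf G K M (E i) (E j)}"
      unfolding F1_def E_def okf_def by (auto simp: kpfK kpfM fK_eq fM_eq P_act kp_eq_iff memI)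
  next
    fix i show "(case i of (i, j) \<Rightarrow> A i * B j) = (case i of (i, j) \<Rightarrow> A i * B j)" by simp
  next
    fix i assume "i \<in> {(i,j). (i,j) \<in> (K\<times>M)\<times>(K\<times>M) \<and> okf G K' M (F1 i) (F1 j)}"
    then show "psinv (case i of (i, j) \<Rightarrow> mulf G K' M (F1 i) (F1 j)) = (case i of (i, j) \<Rightarrow> mulf G K M (E i) (E j))"
      unfolding F1_def E_def mulf_def by (auto simp: kpfM fM_eq psinv_kp2 memI)
  qed
qed

lemma phi_one: "phi_sigma G K M \<sigma> (hone K') = hone K"
proof
  fix z
  show "phi_sigma G K M \<sigma> (hone K') z = hone K z"
  proof (cases "z \<in> carrier G")
    case True
    have "psi z \<in> K' \<longleftrightarrow> z \<in> K"
    proof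
      assume "z \<in> K"
      then show "psi z \<in> K'" using psi_fact[OF True] fKK fMK kp_in memI by simp
    next
      assume h: "psi z \<in> K'"
      have "psi z \<otimes> \<one> = kp (fK G K M z) \<otimes> fM G K M z" using psi_fact[OF True] h P.KC' by simp
      then have "fM G K M z = \<one>" using P.fact_uniq[OF h kp_in[OF fK_in[OF True]] P.M_one fM_in[OF True]] by simp
      then show "z \<in> K" using fKM[OF True] fK_in[OF True] KC' by (metis r_one)
    qed
    then show ?thesis unfolding phi_eq hone_def using True by simp
  next
    case False
    then show ?thesis unfolding phi_eq hone_def using KC' by auto
  qed
qed

lemma phi_alg_iso: "alg_iso G K' K M (phi_sigma G K M \<sigma>)"
  unfolding alg_iso_def
proof (intro conjI ballI allI)
  show "bij_betw (phi_sigma G K M \<sigma>) (Hsp G) (Hsp G)"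
  proof (rule bij_betw_byWitness[where f'="\<lambda>b z. if z \<in> carrier G then b (psinv z) else 0"])
    show "\<forall>a\<in>Hsp G. (\<lambda>z. if z \<in> carrier G then phi_sigma G K M \<sigma> a (psinv z) else 0) = a"
      unfolding phi_eq Hsp_def using psinv_C psi_psinv by (auto intro!: ext)
    show "\<forall>a\<in>Hsp G. phi_sigma G K M \<sigma> (\<lambda>z. if z \<in> carrier G then a (psinv z) else 0) = a"
      unfolding phi_eq Hsp_def using psi_C psinv_psi by (auto intro!: ext)
    show "phi_sigma G K M \<sigma> ` Hsp G \<subseteq> Hsp G" unfolding phi_eq Hsp_def by auto
    show "(\<lambda>b z. if z \<in> carrier G then b (psinv z) else 0) ` Hsp G \<subseteq> Hsp G" unfolding Hsp_def by auto
  qed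
next
  fix a b assume "a \<in> Hsp G" "b \<in> Hsp G"
  then show "phi_sigma G K M \<sigma> (\<lambda>z. a z + b z) = (\<lambda>z. phi_sigma G K M \<sigma> a z + phi_sigma G K M \<sigma> b z)"
    unfolding phi_eq by (auto intro!: ext)
next
  fix c a assume "a \<in> Hsp G"
  then show "phi_sigma G K M \<sigma> (\<lambda>z. c * a z) = (\<lambda>z. c * phi_sigma G K M \<sigma> a z)"
    unfolding phi_eq by (auto intro!: ext)
next
  fix a b assume "a \<in> Hsp G" "b \<in> Hsp G"
  then show "phi_sigma G K M \<sigma> (hmul G K' M a b) = hmul G K M (phi_sigma G K M \<sigma> a) (phi_sigma G K M \<sigma> b)"
    by (rule phi_hom)
next
  show "phi_sigma G K M \<sigma> (hone K') = hone K" by (rule phi_one)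
qed

end

context two
begin

definition Ti where "Ti = Ssum (K\<times>K) (\<lambda>_. 1) (\<lambda>(u,v). (u \<otimes> inv (\<sigma> v), v))"

lemma finKK: "finite (K\<times>K)" using finK by simp
lemma imT: "(\<lambda>(u,v). (u \<otimes> \<sigma> v, v)) ` (K\<times>K) \<subseteq> carrier G \<times> carrier G" using memI by auto
lemma imTi: "(\<lambda>(u,v). (u \<otimes> inv (\<sigma> v), v)) ` (K\<times>K) \<subseteq> carrier G \<times> carrier G" using memI by auto

lemma T_Ti: "hmul2 G K M (T_sigma G K \<sigma>) Ti = hone2 K"
  unfolding T_sigma_Ssum Ti_def hmul2_Ssum[OF finG finKK finKK imT imTi] hone2_Ssum[OF finK]
proof (rule sym, rule Ssum_byW[where h="\<lambda>(u,v). ((u,v),(actK G K M u (\<sigma> v), v))" and p=fst])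
  fix i assume "i \<in> K\<times>K"
  then show "(\<lambda>(u,v). ((u,v),(actK G K M u (\<sigma> v), v))) i \<in>
    {(i, j). (i, j) \<in> (K \<times> K) \<times> K \<times> K \<and>
       okf G K M (fst (case i of (u, v) \<Rightarrow> (u \<otimes> \<sigma> v, v))) (fst (case j of (u, v) \<Rightarrow> (u \<otimes> inv \<sigma> v, v))) \<and>
       okf G K M (snd (case i of (u, v) \<Rightarrow> (u \<otimes> \<sigma> v, v))) (snd (case j of (u, v) \<Rightarrow> (u \<otimes> inv \<sigma> v, v)))}"
    by (auto simp: okf_def fK_eq fM_eq fKK fMK actK_one memI)
next
  fix j assume "j \<in> {(i, j). (i, j) \<in> (K \<times> K) \<times> K \<times> K \<and>
       okf G K M (fst (case i of (u, v) \<Rightarrow> (u \<otimes> \<sigma> v, v))) (fst (case j of (u, v) \<Rightarrow> (u \<otimes> inv \<sigma> v, v))) \<and>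
       okf G K M (snd (case i of (u, v) \<Rightarrow> (u \<otimes> \<sigma> v, v))) (snd (case j of (u, v) \<Rightarrow> (u \<otimes> inv \<sigma> v, v)))}"
  then show "(\<lambda>(u,v). ((u,v),(actK G K M u (\<sigma> v), v))) (fst j) = j"
    by (auto simp: okf_def fK_eq fM_eq fKK fMK actK_one memI)
qed (auto simp: mulf_def fM_eq fMK memI m_assoc)

lemma Ti_T: "hmul2 G K M Ti (T_sigma G K \<sigma>) = hone2 K"
  unfolding T_sigma_Ssum Ti_def hmul2_Ssum[OF finG finKK finKK imTi imT] hone2_Ssum[OF finK]
proof (rule sym, rule Ssum_byW[where h="\<lambda>(u,v). ((u,v),(actK G K M u (inv (\<sigma> v)), v))" and p=fst])
  fix i assume "i \<in> K\<times>K"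
  then show "(\<lambda>(u,v). ((u,v),(actK G K M u (inv (\<sigma> v)), v))) i \<in>
    {(i, j). (i, j) \<in> (K \<times> K) \<times> K \<times> K \<and>
       okf G K M (fst (case i of (u, v) \<Rightarrow> (u \<otimes> inv \<sigma> v, v))) (fst (case j of (u, v) \<Rightarrow> (u \<otimes> \<sigma> v, v))) \<and>
       okf G K M (snd (case i of (u, v) \<Rightarrow> (u \<otimes> inv \<sigma> v, v))) (snd (case j of (u, v) \<Rightarrow> (u \<otimes> \<sigma> v, v)))}"
    by (auto simp: okf_def fK_eq fM_eq fKK fMK actK_one memI)
next
  fix j assume "j \<in> {(i, j). (i, j) \<in> (K \<times> K) \<times> K \<times> K \<and>
       okf G K M (fst (case i of (u, v) \<Rightarrow> (u \<otimes> inv \<sigma> v, v))) (fst (case j of (u, v) \<Rightarrow> (u \<otimes> \<sigma> v, v))) \<and>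
       okf G K M (snd (case i of (u, v) \<Rightarrow> (u \<otimes> inv \<sigma> v, v))) (snd (case j of (u, v) \<Rightarrow> (u \<otimes> \<sigma> v, v)))}"
  then show "(\<lambda>(u,v). ((u,v),(actK G K M u (inv (\<sigma> v)), v))) (fst j) = j"
    by (auto simp: okf_def fK_eq fM_eq fKK fMK actK_one memI)
qed (auto simp: mulf_def fM_eq fMK memI m_assoc)

lemma ec_KM: "u \<in> K \<Longrightarrow> x \<in> M \<Longrightarrow> ec G K M (u \<otimes> x) = (if u = \<one> then 1 else 0)"
  unfolding ec_def using fK_eq by simp

lemma ec_M: "x \<in> M \<Longrightarrow> ec G K M x = 1"
  unfolding ec_def using fK_eq[of \<one> x] K_one MC' by simp

lemma eps_T: "eps_id G K M (T_sigma G K \<sigma>) = hone K"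
proof -
  have "eps_id G K M (T_sigma G K \<sigma>) = Ssum (K\<times>K) (\<lambda>i. if fst i = \<one> then 1 else 0) snd"
    unfolding T_sigma_Ssum eps_id_Ssum[OF finG finKK imT]
    by (rule Ssum_cong) (auto simp: ec_KM ec_M memI)
  also have "\<dots> = Ssum {i \<in> K\<times>K. fst i = \<one>} (\<lambda>_. 1) snd"
    by (rule Ssum_filter[OF finKK])
  also have "\<dots> = Ssum K (\<lambda>_. 1) id"
    by (rule sym, rule Ssum_byW[where h="\<lambda>v. (\<one>, v)" and p=snd]) (auto simp: memI)
  finally show ?thesis using hone_Ssum[OF finK] by simp
qed

lemma T_eps: "id_eps G K M (T_sigma G K \<sigma>) = hone K"
proof -
  have "id_eps G K M (T_sigma G K \<sigma>) = Ssum (K\<times>K) (\<lambda>i. if snd i = \<one> then 1 else 0) (\<lambda>(u,v). u \<otimes> \<sigma> v)"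
    unfolding T_sigma_Ssum id_eps_Ssum[OF finG finKK imT]
    by (rule Ssum_cong) (auto simp: ec_def fKK memI)
  also have "\<dots> = Ssum {i \<in> K\<times>K. snd i = \<one>} (\<lambda>_. 1) (\<lambda>(u,v). u \<otimes> \<sigma> v)"
    by (rule Ssum_filter[OF finKK])
  also have "\<dots> = Ssum K (\<lambda>_. 1) id"
    by (rule sym, rule Ssum_byW[where h="\<lambda>u. (u, \<one>)" and p=fst]) (auto simp: memI sig_one)
  finally show ?thesis using hone_Ssum[OF finK] by simp
qed

end

definition ok2 :: "('g,'b) monoid_scheme \<Rightarrow> 'g set \<Rightarrow> 'g set \<Rightarrow> 'g\<times>'g \<Rightarrow> 'g\<times>'g \<Rightarrow> bool" where
  "ok2 G K M p q \<longleftrightarrow> okf G K M (fst p) (fst q) \<and> okf G K M (snd p) (snd q)"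
definition mul2 :: "('g,'b) monoid_scheme \<Rightarrow> 'g set \<Rightarrow> 'g set \<Rightarrow> 'g\<times>'g \<Rightarrow> 'g\<times>'g \<Rightarrow> 'g\<times>'g" where
  "mul2 G K M p q = (mulf G K M (fst p) (fst q), mulf G K M (snd p) (snd q))"

lemma hmul2_Ssum':
  fixes G :: "('g,'b) monoid_scheme"
  assumes "finite (carrier G)" "finite I" "finite J" "f ` I \<subseteq> carrier G \<times> carrier G" "g ` J \<subseteq> carrier G \<times> carrier G"
  shows "hmul2 G K M (Ssum I c f) (Ssum J d g) =
     Ssum {(i,j). (i,j)\<in>I\<times>J \<and> ok2 G K M (f i) (g j)} (\<lambda>(i,j). c i * d j) (\<lambda>(i,j). mul2 G K M (f i) (g j))"
  unfolding hmul2_Ssum[OF assms] ok2_def mul2_def by simp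

context ufac
begin

lemma mulf_C: "g \<in> carrier G \<Longrightarrow> h \<in> carrier G \<Longrightarrow> mulf G K M g h \<in> carrier G"
  unfolding mulf_def using fM_in MC' by simp

lemma hmul2_Ssum3:
  assumes "finite I1" "finite I2" "finite I3" "f1 ` I1 \<subseteq> carrier G \<times> carrier G"
    "f2 ` I2 \<subseteq> carrier G \<times> carrier G" "f3 ` I3 \<subseteq> carrier G \<times> carrier G"
  shows "hmul2 G K M (hmul2 G K M (Ssum I1 c1 f1) (Ssum I2 c2 f2)) (Ssum I3 c3 f3) =
    Ssum {(k,l). (k,l) \<in> {(i,j). (i,j)\<in>I1\<times>I2 \<and> ok2 G K M (f1 i) (f2 j)} \<times> I3 \<and>
        ok2 G K M (case k of (i,j) \<Rightarrow> mul2 G K M (f1 i) (f2 j)) (f3 l)}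
      (\<lambda>(k,l). (case k of (i,j) \<Rightarrow> c1 i * c2 j) * c3 l)
      (\<lambda>(k,l). mul2 G K M (case k of (i,j) \<Rightarrow> mul2 G K M (f1 i) (f2 j)) (f3 l))"
proof -
  have fin: "finite {(i,j). (i,j)\<in>I1\<times>I2 \<and> ok2 G K M (f1 i) (f2 j)}"
    using assms by (auto intro: finite_subset[of _ "I1\<times>I2"])
  have im: "(\<lambda>(i,j). mul2 G K M (f1 i) (f2 j)) ` {(i,j). (i,j)\<in>I1\<times>I2 \<and> ok2 G K M (f1 i) (f2 j)} \<subseteq> carrier G \<times> carrier G"
    using assms(4,5) unfolding mul2_def by (force intro!: mulf_C)
  show ?thesis
    unfolding hmul2_Ssum'[OF finG assms(1,2,4,5)] hmul2_Ssum'[OF finG fin assms(3) im assms(6)] by simp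
qed

lemma cancel1: "x \<in> carrier G \<Longrightarrow> y \<in> carrier G \<Longrightarrow> inv x \<otimes> (x \<otimes> y) = y"
  by (simp add: m_assoc[symmetric])
lemma cancel2: "x \<in> carrier G \<Longrightarrow> y \<in> carrier G \<Longrightarrow> x \<otimes> (inv x \<otimes> y) = y"
  by (simp add: m_assoc[symmetric])

end

context two
begin

definition tt where "tt u h = actK G K M (u \<otimes> inv h) (inv (\<sigma> h))"
definition mm where "mm h x = actM G K M h x \<otimes> inv (\<sigma> (actK G K M h x))"

lemma tt_in: "u \<in> K \<Longrightarrow> h \<in> K \<Longrightarrow> tt u h \<in> K"
  unfolding tt_def by (simp add: memI)
lemma mm_in: "h \<in> K \<Longrightarrow> x \<in> M \<Longrightarrow> mm h x \<in> M"
  unfolding mm_def by (simp add: memI)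
lemma tt_act: "u \<in> K \<Longrightarrow> h \<in> K \<Longrightarrow> actK G K M (tt u h) (\<sigma> h) = u \<otimes> inv h"
  unfolding tt_def using actK_inv2[of "u \<otimes> inv h" "\<sigma> h"] by (simp add: memI)

lemma core: assumes u: "u \<in> K" and h: "h \<in> K"
  shows "kp (tt u h) \<otimes> \<sigma> h = kp u \<otimes> inv h"
proof -
  define t where "t = tt u h"
  have t: "t \<in> K" using tt_in u h t_def by simp
  have ta: "actK G K M t (\<sigma> h) = u \<otimes> inv h" using tt_act u h t_def by simp
  have "kp t \<otimes> \<sigma> h = \<sigma> t \<otimes> (t \<otimes> \<sigma> h)" unfolding kp_def using t h by (simp add: memI m_assoc)
  also have "\<dots> = \<sigma> t \<otimes> (actM G K M t (\<sigma> h) \<otimes> actK G K M t (\<sigma> h))"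
    using act_eq[OF t sig_in[OF h]] by simp
  also have "\<dots> = (\<sigma> t \<otimes> actM G K M t (\<sigma> h)) \<otimes> actK G K M t (\<sigma> h)"
    using t h by (simp add: memI m_assoc)
  also have "\<dots> = \<sigma> (actK G K M t (\<sigma> h) \<otimes> h) \<otimes> actK G K M t (\<sigma> h)"
    using key[OF t h] by simp
  also have "\<dots> = \<sigma> u \<otimes> (u \<otimes> inv h)" using ta u h by (simp add: memI m_assoc)
  also have "\<dots> = kp u \<otimes> inv h" unfolding kp_def using u h by (simp add: memI m_assoc)
  finally show ?thesis unfolding t_def .
qed

lemma Dt'_val: assumes "u \<in> K" "h \<in> K" "x \<in> M"
  shows "Dt G K' M (kp u \<otimes> x) (kp h) =
     (kp u \<otimes> inv (kp h) \<otimes> (\<sigma> h \<otimes> actM G K M h x \<otimes> inv (\<sigma> (actK G K M h x))), kp h \<otimes> x)"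
  unfolding Dt_def using assms by (simp add: kpfK kpfM P_act)

lemma psinv_Dt1: assumes u: "u \<in> K" and h: "h \<in> K" and x: "x \<in> M"
  shows "psinv (kp u \<otimes> inv (kp h) \<otimes> (\<sigma> h \<otimes> actM G K M h x \<otimes> inv (\<sigma> (actK G K M h x))))
     = tt u h \<otimes> (\<sigma> h \<otimes> mm h x)"
proof -
  have C: "actM G K M h x \<in> carrier G" "inv (\<sigma> (actK G K M h x)) \<in> carrier G" "\<sigma> h \<in> carrier G"
    "kp u \<in> carrier G" "h \<in> carrier G" "kp (tt u h) \<in> carrier G" "u \<in> carrier G" "\<sigma> u \<in> carrier G"
    using u h x tt_in by (auto simp: memI)
  have "kp (tt u h) \<otimes> (\<sigma> h \<otimes> mm h x) = (kp (tt u h) \<otimes> \<sigma> h) \<otimes> mm h x"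
    using C mm_in[OF h x] MC' by (simp add: m_assoc)
  also have "\<dots> = kp u \<otimes> inv h \<otimes> mm h x" using core[OF u h] by simp
  also have "\<dots> = kp u \<otimes> inv (kp h) \<otimes> (\<sigma> h \<otimes> actM G K M h x \<otimes> inv (\<sigma> (actK G K M h x)))"
    unfolding mm_def kp_def using C by (simp add: m_assoc inv_mult_group cancel1)
  finally have e: "psi (tt u h \<otimes> (\<sigma> h \<otimes> mm h x)) = kp u \<otimes> inv (kp h) \<otimes> (\<sigma> h \<otimes> actM G K M h x \<otimes> inv (\<sigma> (actK G K M h x)))"
    using psi_eq[OF tt_in[OF u h], of "\<sigma> h \<otimes> mm h x"] mm_in[OF h x] h by (simp add: memI)
  show ?thesis
    by (rule psinv_eq[OF _ e]) (use tt_in[OF u h] mm_in[OF h x] h in \<open>simp add: memI\<close>)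
qed

definition kinv where "kinv = the_inv_into K kp"

lemma kp_inj_on: "inj_on kp K" using kp_inj by (auto simp: inj_on_def)
lemma kinv_kp: "h \<in> K \<Longrightarrow> kinv (kp h) = h"
  unfolding kinv_def using kp_inj_on by (simp add: the_inv_into_f_f)
lemma kinv_in: "k \<in> K' \<Longrightarrow> kinv k \<in> K \<and> kp (kinv k) = k"
  using K'_ex kinv_kp by force

lemma tt_solve: "v \<in> K \<Longrightarrow> u \<in> K \<Longrightarrow> h \<in> K \<Longrightarrow> actK G K M v (\<sigma> h) = u \<otimes> inv h \<longleftrightarrow> v = tt u h"
  unfolding tt_def using actK_solve[of v "u \<otimes> inv h" "\<sigma> h"] by (simp add: memI)

lemma finKMK: "finite ((K\<times>M)\<times>K)" using finK finM by simp
lemma finKMK': "finite ((K\<times>M)\<times>K')" using finK finM P.finK by simp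

lemma Delta_cond:
  assumes a: "a \<in> Hsp G"
  shows "tens_map G (phi_sigma G K M \<sigma>) (hDelta G K' M a) =
    hmul2 G K M (hmul2 G K M (T_sigma G K \<sigma>) (hDelta G K M (phi_sigma G K M \<sigma> a))) Ti"
proof -
  define A where "A = (\<lambda>(u,x). a (kp u \<otimes> x))"
  define F1 where "F1 = (\<lambda>(u,x). kp u \<otimes> x)"
  define E where "E = (\<lambda>(u::'g,x::'g). u \<otimes> x)"
  define Can where "Can = Ssum ((K\<times>M)\<times>K) (\<lambda>(i,h). A i) (\<lambda>((u,x),h). (tt u h \<otimes> (\<sigma> h \<otimes> mm h x), h \<otimes> x))"
  have eA: "a = Ssum (K\<times>M) A F1" using Hsp_KM'[OF a] unfolding A_def F1_def .
  have pA: "phi_sigma G K M \<sigma> a = Ssum (K\<times>M) A E" using phi_KM unfolding A_def E_def .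
  have iF1: "F1 ` (K \<times> M) \<subseteq> carrier G" using imKM' F1_def by simp
  have iE: "E ` (K \<times> M) \<subseteq> carrier G" using imKM E_def by simp
  have imD': "(\<lambda>(i,h). Dt G K' M (F1 i) h) ` ((K\<times>M)\<times>K') \<subseteq> carrier G \<times> carrier G"
    unfolding F1_def Dt_def by (auto simp: kpfK kpfM memI P.actM_in P.MC' P.K_inv)
  have L: "tens_map G (phi_sigma G K M \<sigma>) (hDelta G K' M a) = Can"
    unfolding Can_def
    apply (subst eA)
    apply (subst hDelta_Ssum[OF finG finKM P.finK iF1])
    apply (subst tens_map_Ssum[where phi="phi_sigma G K M \<sigma>" and ps=psinv, OF finG finKMK' imD' phi_bas], assumption)
  proof (rule sym, rule Ssum_byW[where h="\<lambda>(i,h). (i, kp h)" and p="\<lambda>(i,k). (i, kinv k)"], goal_cases)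
    case (1 i) then show ?case by (auto simp: kp_in)
  next
    case (2 j) then show ?case by (auto simp: kinv_in)
  next
    case (3 j) then show ?case by (auto simp: kinv_in)
  next
    case (4 i) then show ?case by (auto simp: kinv_kp)
  next
    case (5 i) then show ?case by auto
  next
    case (6 i) then show ?case
      by (auto simp: F1_def Dt'_val psinv_Dt1 psinv_kp memI)
  qed
  have imD: "(\<lambda>(i,h). Dt G K M (E i) h) ` ((K\<times>M)\<times>K) \<subseteq> carrier G \<times> carrier G"
    unfolding E_def Dt_def by (auto simp: fK_eq fM_eq memI)
  have R: "hmul2 G K M (hmul2 G K M (T_sigma G K \<sigma>) (hDelta G K M (phi_sigma G K M \<sigma> a))) Ti = Can"
    unfolding Can_def
    apply (subst pA)
    apply (subst hDelta_Ssum[OF finG finKM finK iE])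
    apply (subst T_sigma_Ssum)
    apply (subst Ti_def)
    apply (subst hmul2_Ssum3[OF finKK finKMK finKK imT imD imTi])
  proof (rule sym, rule Ssum_byW[where h="\<lambda>((u,x),h). (((tt u h, h), ((u,x),h)), (actK G K M (tt u h) (\<sigma> h \<otimes> actM G K M h x), actK G K M h x))"
        and p="\<lambda>j. snd (fst j)"], goal_cases)
    case (1 i) then show ?case
      by (auto simp: E_def Dt_def ok2_def okf_def mul2_def mulf_def fK_eq fM_eq fK_eq2 fM_eq2 fKK fMK actK_one tt_in tt_act memI)
  next
    case (2 j) then show ?case by auto
  next
    case (3 j) then show ?case
      by (auto simp: E_def Dt_def ok2_def okf_def mul2_def mulf_def fK_eq fM_eq fK_eq2 fM_eq2 fKK fMK actK_one tt_in tt_solve memI)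
  next
    case (4 i) then show ?case by auto
  next
    case (5 i) then show ?case by auto
  next
    case (6 i) then show ?case
      by (auto simp: E_def Dt_def mul2_def mulf_def mm_def fK_eq fM_eq fK_eq2 fM_eq2 fKK fMK tt_in memI; simp add: m_assoc tt_in memI)
  qed
  show ?thesis using L R by simp
qed

end

context two
begin

lemma solve_r: "u \<in> carrier G \<Longrightarrow> h \<in> carrier G \<Longrightarrow> y \<in> carrier G \<Longrightarrow> (y = u \<otimes> inv h) = (u = y \<otimes> h)"
  by (metis inv_closed m_closed m_assoc r_inv r_one l_inv)

lemma cancel3: "x \<in> carrier G \<Longrightarrow> h \<in> carrier G \<Longrightarrow> x \<otimes> h \<otimes> inv h = x"
  by (simp add: m_assoc)

lemma finKKK: "finite ((K\<times>K)\<times>K)" and finKKK2: "finite (K\<times>(K\<times>K))" using finK by auto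

lemma cocycle:
  "hmul3 G K M (tens_T1 K (T_sigma G K \<sigma>)) (Delta_id G K M (T_sigma G K \<sigma>)) =
   hmul3 G K M (tens_1T K (T_sigma G K \<sigma>)) (id_Delta G K M (T_sigma G K \<sigma>))"
proof -
  define Can where "Can = Ssum (K\<times>(K\<times>K)) (\<lambda>_. 1) (\<lambda>(a,h,v). (a \<otimes> (\<sigma> h \<otimes> actM G K M h (\<sigma> v)), h \<otimes> \<sigma> v, v))"
  have im1: "(\<lambda>(i,k). (fst ((\<lambda>(u,v). (u \<otimes> \<sigma> v, v)) i), snd ((\<lambda>(u,v). (u \<otimes> \<sigma> v, v)) i), k)) ` ((K\<times>K)\<times>K)
      \<subseteq> carrier G \<times> carrier G \<times> carrier G" by (auto simp: memI)
  have im2: "(\<lambda>(i,h). (fst (Dt G K M (fst ((\<lambda>(u,v). (u \<otimes> \<sigma> v, v)) i)) h), snd (Dt G K M (fst ((\<lambda>(u,v). (u \<otimes> \<sigma> v, v)) i)) h),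
       snd ((\<lambda>(u,v). (u \<otimes> \<sigma> v, v)) i))) ` ((K\<times>K)\<times>K) \<subseteq> carrier G \<times> carrier G \<times> carrier G"
    by (auto simp: Dt_def fK_eq fM_eq memI)
  have im3: "(\<lambda>(k,i). (k, fst ((\<lambda>(u,v). (u \<otimes> \<sigma> v, v)) i), snd ((\<lambda>(u,v). (u \<otimes> \<sigma> v, v)) i))) ` (K\<times>(K\<times>K))
      \<subseteq> carrier G \<times> carrier G \<times> carrier G" by (auto simp: memI)
  have im4: "(\<lambda>(i,h). (fst ((\<lambda>(u,v). (u \<otimes> \<sigma> v, v)) i), fst (Dt G K M (snd ((\<lambda>(u,v). (u \<otimes> \<sigma> v, v)) i)) h),
       snd (Dt G K M (snd ((\<lambda>(u,v). (u \<otimes> \<sigma> v, v)) i)) h))) ` ((K\<times>K)\<times>K) \<subseteq> carrier G \<times> carrier G \<times> carrier G"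
    by (auto simp: Dt_def fKK fMK memI)
  have L: "hmul3 G K M (tens_T1 K (T_sigma G K \<sigma>)) (Delta_id G K M (T_sigma G K \<sigma>)) = Can"
    unfolding Can_def T_sigma_Ssum tens_T1_Ssum[OF finK] Delta_id_Ssum[OF finG finKK finK imT]
      hmul3_Ssum[OF finG finKKK finKKK im1 im2]
  proof (rule sym, rule Ssum_byW[where h="\<lambda>(a,h,v). (((a,h),v),((actK G K M a (\<sigma> h) \<otimes> h, v),h))"
        and p="\<lambda>(((a,b),c),_). (a,b,c)"], goal_cases)
    case (1 i) then show ?case
      by (auto simp: Dt_def okf_def fK_eq fM_eq fKK fMK actK_one memI cancel3)
  next
    case (2 j) then show ?case by auto
  next
    case (3 j) then show ?case
      by (auto simp: Dt_def okf_def fK_eq fM_eq fKK fMK actK_one memI solve_r)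
  next
    case (4 i) then show ?case by auto
  next
    case (5 i) then show ?case by auto
  next
    case (6 i) then show ?case
      by (auto simp: Dt_def mulf_def fK_eq fM_eq fKK fMK memI cancel3; simp add: m_assoc memI)
  qed
  have R: "hmul3 G K M (tens_1T K (T_sigma G K \<sigma>)) (id_Delta G K M (T_sigma G K \<sigma>)) = Can"
    unfolding Can_def T_sigma_Ssum tens_1T_Ssum[OF finK] id_Delta_Ssum[OF finG finKK finK imT]
      hmul3_Ssum[OF finG finKKK2 finKKK im3 im4]
  proof (rule sym, rule Ssum_byW[where h="\<lambda>(a,h,v). ((a,(h,v)),((a, actK G K M h (\<sigma> v) \<otimes> v),v))"
        and p="\<lambda>(k,_). k"], goal_cases)
    case (1 i) then show ?case
      by (auto simp: Dt_def okf_def fK_eq fM_eq fKK fMK actK_one actM_one memI cancel3)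
  next
    case (2 j) then show ?case by auto
  next
    case (3 j) then show ?case
      by (auto simp: Dt_def okf_def fK_eq fM_eq fKK fMK actK_one actM_one memI solve_r)
  next
    case (4 i) then show ?case by auto
  next
    case (5 i) then show ?case by auto
  next
    case (6 i) then show ?case
      by (auto simp: Dt_def mulf_def fK_eq fM_eq fKK fMK actM_one memI key[symmetric])
  qed
  show ?thesis using L R by simp
qed

end

theorem proposition6:
  fixes G :: "('g,'b) monoid_scheme" and Kp K' M :: "'g set" and \<sigma> :: "'g \<Rightarrow> 'g"
  assumes "group G" and "finite (carrier G)"
    and "unique_factorization G Kp M" and "unique_factorization G K' M"
    and "\<forall>u\<in>Kp. \<sigma> u \<in> M"
    and "K' = {\<sigma> u \<otimes>\<^bsub>G\<^esub> u | u. u \<in> Kp}"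
  shows "quasi_iso G K' Kp M (phi_sigma G Kp M \<sigma>) (T_sigma G Kp \<sigma>)"
proof -
  interpret two G Kp M K' \<sigma>
    using assms by (simp add: two_def two_axioms_def ufac_def ufac_axioms_def)
  show ?thesis
    unfolding quasi_iso_def
  proof (intro conjI exI[where x=Ti])
    show "alg_iso G K' Kp M (phi_sigma G Kp M \<sigma>)" by (rule phi_alg_iso)
    show "hmul2 G Kp M (T_sigma G Kp \<sigma>) Ti = hone2 Kp" by (rule T_Ti)
    show "hmul2 G Kp M Ti (T_sigma G Kp \<sigma>) = hone2 Kp" by (rule Ti_T)
    show "\<forall>a\<in>Hsp G. tens_map G (phi_sigma G Kp M \<sigma>) (hDelta G K' M a) =
        hmul2 G Kp M (hmul2 G Kp M (T_sigma G Kp \<sigma>) (hDelta G Kp M (phi_sigma G Kp M \<sigma> a))) Ti"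
      using Delta_cond by blast
    show "hmul3 G Kp M (tens_T1 Kp (T_sigma G Kp \<sigma>)) (Delta_id G Kp M (T_sigma G Kp \<sigma>)) =
      hmul3 G Kp M (tens_1T Kp (T_sigma G Kp \<sigma>)) (id_Delta G Kp M (T_sigma G Kp \<sigma>))" by (rule cocycle)
    show "eps_id G Kp M (T_sigma G Kp \<sigma>) = hone Kp" by (rule eps_T)
    show "id_eps G Kp M (T_sigma G Kp \<sigma>) = hone Kp" by (rule T_eps)
  qed
qed

end
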